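(* Let $\mathbb{X}$ be a topological space with viable base $\Omega_0$, $\iota:X\to\widehat{X}$ the canonical map, and $\mathbb{D}$ a bc-domain with basis $D_0$. The map $\gamma:\widehat{\mathbb{B}}\to\mathbb{B}_{\mathrm{abs}}$, $\gamma(f)=f\circ\iota$, is a bijection with $\gamma\big(\bigsqcup_{i}b_i\chi_{\mathcal{O}_{{\downarrow}W_i}}\big)=\bigsqcup_i b_i\chi_{W_i}$, and for all $f,g\in\widehat{\mathbb{B}}$: $f\ll g$ (in $[\widehat{\mathbb{X}}_{\Omega_0}\to\mathbb{D}]$) if and only if $\gamma(f)\prec\gamma(g)$.
   Context: A viable base of $\mathbb{X}=(X,\tau_{\mathbb{X}})$ is a family $\Omega_0\subseteq\tau_{\mathbb{X}}$ closed under finite unions and finite intersections (so $\emptyset,X\in\Omega_0$) which is a base of $\tau_{\mathbb{X}}$. ${\downarrow}W=\{U\in\Omega_0:U\subseteq W\}$; $\mathrm{Idl}(\Omega_0)$ is the complete lattice of ideals (nonempty, downward closed, directed subsets) of $(\Omega_0,\subseteq)$. $\widehat{\mathbb{X}}_{\Omega_0}$ is the set $\widehat{X}$ of completely prime filters of $\mathrm{Idl}(\Omega_0)$ (nonempty upward closed sets closed under binary meets with $\bigvee A\in F\Rightarrow A\cap F\neq\emptyset$), topologized by open sets $\mathcal{O}_I=\{y:I\in y\}$; $\iota(x)=\{I: x\in\bigcup I\}$. A bc-domain is a continuous dcpo with least element $\bot$ in which bounded subsets have joins; $\ll$ is way-below; $\twoheaduparrow b=\{d:b\ll d\}$. $b\chi_O$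 has value $b$ on $O$ and $\bot$ elsewhere; a family $\{b_i\chi_{O_i}\}_{i\in I}$ is consistent if for every $J\subseteq I$ with $\bigcap_{j\in J}O_j\neq\emptyset$ the $b_j$ ($j\in J$) have an upper bound; joins are pointwise. $\widehat{\mathbb{B}}$ = pointwise joins of finite consistent families $b_i\chi_{\mathcal{O}_{{\downarrow}W_i}}$ with $W_i\in\Omega_0$, $b_i\in D_0$ (functions on $\widehat{X}$). $\mathbb{B}_{\mathrm{abs}}$ = pointwise joins of finite consistent families $b_i\chi_{O_i}$ with $O_i\in\Omega_0$, $b_i\in D_0$ (functions on $X$). The relation $\prec$ on $\mathbb{B}_{\mathrm{abs}}$: $\bigsqcup_{i\in I}b_i\chi_{O_i}\prec h$ iff $O_i\subseteq h^{-1}(\twoheaduparrow b_i)$ for all $i\in I$. *)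

theory Defs
  imports "HOL-Analysis.Analysis"
begin

definition viable_base :: "'a topology \<Rightarrow> 'a set set \<Rightarrow> bool" where
  "viable_base X \<Omega>0 \<longleftrightarrow>
     (\<forall>U\<in>\<Omega>0. openin X U) \<and>
     {} \<in> \<Omega>0 \<and> topspace X \<in> \<Omega>0 \<and>
     (\<forall>U\<in>\<Omega>0. \<forall>V\<in>\<Omega>0. U \<union> V \<in> \<Omega>0 \<and> U \<inter> V \<in> \<Omega>0) \<and>
     (\<forall>U. openin X U \<longrightarrow> (\<exists>\<F>\<subseteq>\<Omega>0. U = \<Union>\<F>))"

definition down_base :: "'a set set \<Rightarrow> 'a set \<Rightarrow> 'a set set" where
  "down_base \<Omega>0 W = {U\<in>\<Omega>0. U \<subseteq> W}"

definition Idl :: "'a set set \<Rightarrow> 'a set set set" where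
  "Idl \<Omega>0 = {I. I \<subseteq> \<Omega>0 \<and> I \<noteq> {} \<and>
              (\<forall>U\<in>I. \<forall>V\<in>\<Omega>0. V \<subseteq> U \<longrightarrow> V \<in> I) \<and>
              (\<forall>U\<in>I. \<forall>V\<in>I. \<exists>Z\<in>I. U \<subseteq> Z \<and> V \<subseteq> Z)}"

definition idl_Sup :: "'a set set \<Rightarrow> 'a set set set \<Rightarrow> 'a set set" where
  "idl_Sup \<Omega>0 A = \<Inter>{J\<in>Idl \<Omega>0. \<Union>A \<subseteq> J}"

text \<open>completely prime filters of Idl(Omega0); meets are intersections\<close>
definition cp_filter :: "'a set set \<Rightarrow> 'a set set set \<Rightarrow> bool" where
  "cp_filter \<Omega>0 F \<longleftrightarrow>
     F \<subseteq> Idl \<Omega>0 \<and> F \<noteq> {} \<and>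
     (\<forall>I\<in>F. \<forall>J\<in>Idl \<Omega>0. I \<subseteq> J \<longrightarrow> J \<in> F) \<and>
     (\<forall>I\<in>F. \<forall>J\<in>F. I \<inter> J \<in> F) \<and>
     (\<forall>A\<subseteq>Idl \<Omega>0. idl_Sup \<Omega>0 A \<in> F \<longrightarrow> A \<inter> F \<noteq> {})"

definition Xhat :: "'a set set \<Rightarrow> 'a set set set set" where
  "Xhat \<Omega>0 = {F. cp_filter \<Omega>0 F}"

definition Ohat :: "'a set set \<Rightarrow> 'a set set \<Rightarrow> 'a set set set set" where
  "Ohat \<Omega>0 I = {y\<in>Xhat \<Omega>0. I \<in> y}"

definition Xhat_top :: "'a set set \<Rightarrow> 'a set set set topology" where
  "Xhat_top \<Omega>0 = topology_generated_by {Ohat \<Omega>0 I | I. I \<in> Idl \<Omega>0}"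

definition iota :: "'a set set \<Rightarrow> 'a \<Rightarrow> 'a set set set" where
  "iota \<Omega>0 x = {I\<in>Idl \<Omega>0. x \<in> \<Union>I}"

definition dom_directed :: "'d::order set \<Rightarrow> bool" where
  "dom_directed S \<longleftrightarrow> S \<noteq> {} \<and> (\<forall>x\<in>S. \<forall>y\<in>S. \<exists>z\<in>S. x \<le> z \<and> y \<le> z)"

definition is_lub_in :: "'d::order set \<Rightarrow> 'd set \<Rightarrow> 'd \<Rightarrow> bool" where
  "is_lub_in P S x \<longleftrightarrow> x \<in> P \<and> (\<forall>s\<in>S. s \<le> x) \<and> (\<forall>y\<in>P. (\<forall>s\<in>S. s \<le> y) \<longrightarrow> x \<le> y)"

definition way_below_in :: "'d::order set \<Rightarrow> 'd \<Rightarrow> 'd \<Rightarrow> bool" where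
  "way_below_in P x y \<longleftrightarrow>
     (\<forall>S s. S \<subseteq> P \<longrightarrow> dom_directed S \<longrightarrow> is_lub_in P S s \<longrightarrow> y \<le> s \<longrightarrow> (\<exists>d\<in>S. x \<le> d))"

abbreviation way_below :: "'d::order \<Rightarrow> 'd \<Rightarrow> bool" (infix "\<lless>" 50) where
  "x \<lless> y \<equiv> way_below_in UNIV x y"

definition dlub :: "'d::order set \<Rightarrow> 'd" where
  "dlub S = (THE x. is_lub_in UNIV S x)"

definition dbot :: "'d::order" where
  "dbot = dlub {}"

text \<open>D (the whole type 'd) is a bc-domain with basis D0: a dcpo in which every
  bounded subset has a join (hence a least element), and every element is the
  directed join of the basis elements way below it (hence D is continuous).\<close>
definition bc_domain_with_basis :: "('d::order) set \<Rightarrow> bool" where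
  "bc_domain_with_basis D0 \<longleftrightarrow>
     (\<forall>S::'d set. dom_directed S \<longrightarrow> (\<exists>s. is_lub_in UNIV S s)) \<and>
     (\<forall>S::'d set. (\<exists>u. \<forall>s\<in>S. s \<le> u) \<longrightarrow> (\<exists>s. is_lub_in UNIV S s)) \<and>
     (\<forall>x. dom_directed {b\<in>D0. b \<lless> x} \<and> is_lub_in UNIV {b\<in>D0. b \<lless> x} x)"

definition scott_open :: "'d::order set \<Rightarrow> bool" where
  "scott_open U \<longleftrightarrow>
     (\<forall>x y. x \<in> U \<longrightarrow> x \<le> y \<longrightarrow> y \<in> U) \<and>
     (\<forall>S s. dom_directed S \<longrightarrow> is_lub_in UNIV S s \<longrightarrow> s \<in> U \<longrightarrow> S \<inter> U \<noteq> {})"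

text \<open>the function space [T -> D] of continuous maps (D with the Scott topology),
  ordered pointwise; functions are extended by bottom outside topspace T.\<close>
definition cont_fun_space :: "'x topology \<Rightarrow> ('x \<Rightarrow> 'd::order) set" where
  "cont_fun_space T = {f. (\<forall>U. scott_open U \<longrightarrow> openin T {y\<in>topspace T. f y \<in> U}) \<and>
                          (\<forall>y. y \<notin> topspace T \<longrightarrow> f y = dbot)}"

text \<open>pointwise join of the family b_i chi_{O_i}, i in I\<close>
definition step_join :: "nat set \<Rightarrow> (nat \<Rightarrow> 'd::order) \<Rightarrow> (nat \<Rightarrow> 'x set) \<Rightarrow> 'x \<Rightarrow> 'd" where
  "step_join I b Os = (\<lambda>x. dlub {b i | i. i \<in> I \<and> x \<in> Os i})"

definition consistent_family :: "nat set \<Rightarrow> (nat \<Rightarrow> 'd::order) \<Rightarrow> (nat \<Rightarrow> 'x set) \<Rightarrow> bool" where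
  "consistent_family I b Os \<longleftrightarrow>
     (\<forall>J\<subseteq>I. (\<Inter>j\<in>J. Os j) \<noteq> {} \<longrightarrow> (\<exists>u. \<forall>j\<in>J. b j \<le> u))"

definition Bhat :: "'a set set \<Rightarrow> 'd::order set \<Rightarrow> ('a set set set \<Rightarrow> 'd) set" where
  "Bhat \<Omega>0 D0 = {step_join I b (\<lambda>i. Ohat \<Omega>0 (down_base \<Omega>0 (W i))) | I b W.
      finite I \<and> (\<forall>i\<in>I. W i \<in> \<Omega>0 \<and> b i \<in> D0) \<and>
      consistent_family I b (\<lambda>i. Ohat \<Omega>0 (down_base \<Omega>0 (W i)))}"

definition B_abs :: "'a set set \<Rightarrow> 'd::order set \<Rightarrow> ('a \<Rightarrow> 'd) set" where
  "B_abs \<Omega>0 D0 = {step_join I b Os | I b Os.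
      finite I \<and> (\<forall>i\<in>I. Os i \<in> \<Omega>0 \<and> b i \<in> D0) \<and> consistent_family I b Os}"

definition abs_prec :: "'a set set \<Rightarrow> 'd::order set \<Rightarrow> ('a \<Rightarrow> 'd) \<Rightarrow> ('a \<Rightarrow> 'd) \<Rightarrow> bool" where
  "abs_prec \<Omega>0 D0 f h \<longleftrightarrow>
     (\<exists>I b Os. finite I \<and> (\<forall>i\<in>I. Os i \<in> \<Omega>0 \<and> b i \<in> D0) \<and> consistent_family I b Os \<and>
        f = step_join I b Os \<and> (\<forall>i\<in>I. Os i \<subseteq> h -` {d. b i \<lless> d}))"

end

theory Submission
  imports Defs
begin


locale vb = fixes X :: "'a topology" and \<Omega> :: "'a set set"
  assumes vb: "viable_base X \<Omega>"
begin

lemma vb_open: "U \<in> \<Omega> \<Longrightarrow> openin X U" using vb unfolding viable_base_def by simp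
lemma Om_sub: "U \<in> \<Omega> \<Longrightarrow> U \<subseteq> topspace X"
  using vb_open openin_subset by metis
lemma Om_empty: "{} \<in> \<Omega>" using vb unfolding viable_base_def by simp
lemma Om_top: "topspace X \<in> \<Omega>" using vb unfolding viable_base_def by simp
lemma Om_Un: "U \<in> \<Omega> \<Longrightarrow> V \<in> \<Omega> \<Longrightarrow> U \<union> V \<in> \<Omega>" using vb unfolding viable_base_def by simp
lemma Om_Int: "U \<in> \<Omega> \<Longrightarrow> V \<in> \<Omega> \<Longrightarrow> U \<inter> V \<in> \<Omega>" using vb unfolding viable_base_def by simp

lemma Om_Union: "finite F \<Longrightarrow> F \<subseteq> \<Omega> \<Longrightarrow> \<Union>F \<in> \<Omega>"
  by (induction F rule: finite_induct) (auto intro: Om_Un Om_empty)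
lemma Om_Inter: "finite F \<Longrightarrow> F \<subseteq> \<Omega> \<Longrightarrow> topspace X \<inter> \<Inter>F \<in> \<Omega>"
proof (induction F rule: finite_induct)
  case empty then show ?case using Om_top by simp
next
  case (insert x F)
  then have "topspace X \<inter> \<Inter>(insert x F) = x \<inter> (topspace X \<inter> \<Inter>F)" by auto
  then show ?case using insert Om_Int by auto
qed

lemma idl_sub: "I \<in> Idl \<Omega> \<Longrightarrow> I \<subseteq> \<Omega>" by (simp add: Idl_def)
lemma idl_ne: "I \<in> Idl \<Omega> \<Longrightarrow> I \<noteq> {}" by (simp add: Idl_def)
lemma idl_down: "I \<in> Idl \<Omega> \<Longrightarrow> U \<in> I \<Longrightarrow> V \<in> \<Omega> \<Longrightarrow> V \<subseteq> U \<Longrightarrow> V \<in> I"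
  by (simp add: Idl_def)
lemma idl_dir: "I \<in> Idl \<Omega> \<Longrightarrow> U \<in> I \<Longrightarrow> V \<in> I \<Longrightarrow> \<exists>Z\<in>I. U \<subseteq> Z \<and> V \<subseteq> Z"
  by (simp add: Idl_def)
lemma idl_empty: "I \<in> Idl \<Omega> \<Longrightarrow> {} \<in> I"
proof -
  assume I: "I \<in> Idl \<Omega>"
  then obtain U where "U \<in> I" using idl_ne by blast
  then show ?thesis using idl_down[OF I _ Om_empty] by simp
qed
lemma idl_Un: "I \<in> Idl \<Omega> \<Longrightarrow> U \<in> I \<Longrightarrow> V \<in> I \<Longrightarrow> U \<union> V \<in> I"
proof -
  assume a: "I \<in> Idl \<Omega>" "U \<in> I" "V \<in> I"
  then obtain Z where "Z \<in> I" "U \<subseteq> Z" "V \<subseteq> Z" using idl_dir by blast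
  moreover have "U \<union> V \<in> \<Omega>" using a Om_Un idl_sub by (simp add: subset_iff)
  ultimately show ?thesis using idl_down[OF a(1)] by simp
qed
lemma IdlI: "I \<subseteq> \<Omega> \<Longrightarrow> {} \<in> I \<Longrightarrow> (\<And>U V. U \<in> I \<Longrightarrow> V \<in> \<Omega> \<Longrightarrow> V \<subseteq> U \<Longrightarrow> V \<in> I)
   \<Longrightarrow> (\<And>U V. U \<in> I \<Longrightarrow> V \<in> I \<Longrightarrow> U \<union> V \<in> I) \<Longrightarrow> I \<in> Idl \<Omega>"
  unfolding Idl_def by (intro CollectI conjI ballI impI; blast)
lemma down_Idl: "W \<in> \<Omega> \<Longrightarrow> down_base \<Omega> W \<in> Idl \<Omega>"
  by (rule IdlI) (auto simp: down_base_def Om_empty Om_Un)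
lemma down_mem: "W \<in> \<Omega> \<Longrightarrow> W \<in> down_base \<Omega> W" by (simp add: down_base_def)
lemma down_mono: "U \<subseteq> V \<Longrightarrow> down_base \<Omega> U \<subseteq> down_base \<Omega> V" by (auto simp: down_base_def)
lemma down_Int: "down_base \<Omega> (U \<inter> V) = down_base \<Omega> U \<inter> down_base \<Omega> V" by (auto simp: down_base_def)
lemma down_top: "down_base \<Omega> (topspace X) = \<Omega>" using Om_sub by (auto simp: down_base_def)
lemma Om_Idl: "\<Omega> \<in> Idl \<Omega>" using down_Idl[OF Om_top] down_top by simp

lemma idl_Sup_Idl: "\<Union>A \<subseteq> \<Omega> \<Longrightarrow> idl_Sup \<Omega> A \<in> Idl \<Omega>"
proof -
  assume A: "\<Union>A \<subseteq> \<Omega>"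
  define JJ where "JJ = {J\<in>Idl \<Omega>. \<Union>A \<subseteq> J}"
  have OJ: "\<Omega> \<in> JJ" unfolding JJ_def using A Om_Idl by simp
  have JI: "J \<in> Idl \<Omega>" if "J \<in> JJ" for J using that unfolding JJ_def by simp
  have "\<Inter>JJ \<in> Idl \<Omega>"
  proof (rule IdlI)
    show "\<Inter>JJ \<subseteq> \<Omega>" using OJ by (rule Inter_lower)
    show "{} \<in> \<Inter>JJ" using JI idl_empty by simp
    show "V \<in> \<Inter>JJ" if "U \<in> \<Inter>JJ" "V \<in> \<Omega>" "V \<subseteq> U" for U V
      using that JI idl_down by blast
    show "U \<union> V \<in> \<Inter>JJ" if "U \<in> \<Inter>JJ" "V \<in> \<Inter>JJ" for U V
      using that JI idl_Un by blast
  qed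
  then show ?thesis unfolding idl_Sup_def JJ_def .
qed
lemma idl_Sup_upper: "\<Union>A \<subseteq> idl_Sup \<Omega> A" unfolding idl_Sup_def by blast
lemma idl_Sup_least: "J \<in> Idl \<Omega> \<Longrightarrow> \<Union>A \<subseteq> J \<Longrightarrow> idl_Sup \<Omega> A \<subseteq> J" unfolding idl_Sup_def by blast


lemma idl_Int: "I \<in> Idl \<Omega> \<Longrightarrow> J \<in> Idl \<Omega> \<Longrightarrow> I \<inter> J \<in> Idl \<Omega>"
  by (rule IdlI) (auto intro: idl_empty idl_Un idl_down dest: idl_sub)

lemma xh_cp_filter: "y \<in> Xhat \<Omega> \<Longrightarrow> cp_filter \<Omega> y" by (simp add: Xhat_def)
lemma xh_sub: "y \<in> Xhat \<Omega> \<Longrightarrow> I \<in> y \<Longrightarrow> I \<in> Idl \<Omega>"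
  by (auto simp: Xhat_def cp_filter_def)
lemma xh_up: "y \<in> Xhat \<Omega> \<Longrightarrow> I \<in> y \<Longrightarrow> J \<in> Idl \<Omega> \<Longrightarrow> I \<subseteq> J \<Longrightarrow> J \<in> y"
  by (simp add: Xhat_def cp_filter_def)
lemma xh_int: "y \<in> Xhat \<Omega> \<Longrightarrow> I \<in> y \<Longrightarrow> J \<in> y \<Longrightarrow> I \<inter> J \<in> y"
  by (simp add: Xhat_def cp_filter_def)
lemma xh_cp: "y \<in> Xhat \<Omega> \<Longrightarrow> A \<subseteq> Idl \<Omega> \<Longrightarrow> idl_Sup \<Omega> A \<in> y \<Longrightarrow> \<exists>I\<in>A. I \<in> y"
proof -
  assume a: "y \<in> Xhat \<Omega>" "A \<subseteq> Idl \<Omega>" "idl_Sup \<Omega> A \<in> y"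
  have "cp_filter \<Omega> y" using a(1) by (simp add: Xhat_def)
  then have "\<forall>A\<subseteq>Idl \<Omega>. idl_Sup \<Omega> A \<in> y \<longrightarrow> A \<inter> y \<noteq> {}"
    unfolding cp_filter_def by (elim conjE) assumption
  then have "A \<inter> y \<noteq> {}" using a by blast
  then show ?thesis by blast
qed
lemma xh_ne: "y \<in> Xhat \<Omega> \<Longrightarrow> y \<noteq> {}"
  by (simp add: Xhat_def cp_filter_def)
lemma xh_Om: "y \<in> Xhat \<Omega> \<Longrightarrow> \<Omega> \<in> y"
proof -
  assume y: "y \<in> Xhat \<Omega>"
  then obtain I where "I \<in> y" using xh_ne by blast
  then show ?thesis using y xh_up[OF y _ Om_Idl] xh_sub idl_sub by blast
qed
lemma xh_not_empty: "y \<in> Xhat \<Omega> \<Longrightarrow> down_base \<Omega> {} \<notin> y"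
proof
  assume y: "y \<in> Xhat \<Omega>" and d: "down_base \<Omega> {} \<in> y"
  have "down_base \<Omega> {} \<subseteq> idl_Sup \<Omega> {}"
    unfolding down_base_def idl_Sup_def using idl_empty by auto
  moreover have "idl_Sup \<Omega> {} \<in> Idl \<Omega>" by (rule idl_Sup_Idl) auto
  ultimately have "idl_Sup \<Omega> {} \<in> y" using xh_up[OF y d] by blast
  then show False using xh_cp[OF y, of "{}"] by auto
qed
lemma xh_Un: "y \<in> Xhat \<Omega> \<Longrightarrow> U \<in> \<Omega> \<Longrightarrow> V \<in> \<Omega> \<Longrightarrow> down_base \<Omega> (U \<union> V) \<in> y
   \<Longrightarrow> down_base \<Omega> U \<in> y \<or> down_base \<Omega> V \<in> y"
proof -
  assume y: "y \<in> Xhat \<Omega>" and UV: "U \<in> \<Omega>" "V \<in> \<Omega>" and d: "down_base \<Omega> (U \<union> V) \<in> y"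
  define A where "A = {down_base \<Omega> U, down_base \<Omega> V}"
  have A: "A \<subseteq> Idl \<Omega>" using UV down_Idl unfolding A_def by simp
  have "\<Union>A \<subseteq> \<Omega>" using A idl_sub by blast
  then have S: "idl_Sup \<Omega> A \<in> Idl \<Omega>" by (rule idl_Sup_Idl)
  have "U \<in> \<Union>A" "V \<in> \<Union>A" unfolding A_def using UV down_mem by simp_all
  then have "U \<in> idl_Sup \<Omega> A" "V \<in> idl_Sup \<Omega> A" using idl_Sup_upper[of A] by (simp_all add: subset_iff)
  then have UVS: "U \<union> V \<in> idl_Sup \<Omega> A" using idl_Un[OF S] by simp
  have "down_base \<Omega> (U \<union> V) \<subseteq> idl_Sup \<Omega> A"
  proof
    fix Z assume "Z \<in> down_base \<Omega> (U \<union> V)"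
    then have "Z \<in> \<Omega>" "Z \<subseteq> U \<union> V" unfolding down_base_def by simp_all
    then show "Z \<in> idl_Sup \<Omega> A" using idl_down[OF S UVS] by simp
  qed
  then have "idl_Sup \<Omega> A \<in> y" using xh_up[OF y d S] by simp
  then obtain I where "I \<in> A" "I \<in> y" using xh_cp[OF y A] by blast
  then show ?thesis unfolding A_def by auto
qed
lemma xh_Union: "finite F \<Longrightarrow> F \<subseteq> \<Omega> \<Longrightarrow> y \<in> Xhat \<Omega> \<Longrightarrow> down_base \<Omega> (\<Union>F) \<in> y
   \<Longrightarrow> \<exists>W\<in>F. down_base \<Omega> W \<in> y"
proof (induction F rule: finite_induct)
  case empty then show ?case using xh_not_empty by simp
next
  case (insert x F)
  have "\<Union>F \<in> \<Omega>" using insert Om_Union by simp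
  then have "down_base \<Omega> x \<in> y \<or> down_base \<Omega> (\<Union>F) \<in> y"
    using xh_Un[of y x "\<Union>F"] insert.prems by simp
  then show ?case using insert.IH insert.prems by blast
qed
lemma xh_Inter: "finite F \<Longrightarrow> F \<subseteq> \<Omega> \<Longrightarrow> y \<in> Xhat \<Omega> \<Longrightarrow> (\<forall>W\<in>F. down_base \<Omega> W \<in> y)
   \<Longrightarrow> down_base \<Omega> (topspace X \<inter> \<Inter>F) \<in> y"
proof (induction F rule: finite_induct)
  case empty then show ?case using xh_Om down_top by simp
next
  case (insert x F)
  have e: "topspace X \<inter> \<Inter>(insert x F) = x \<inter> (topspace X \<inter> \<Inter>F)" by auto
  have a: "down_base \<Omega> x \<in> y" using insert.prems by simp
  have b: "down_base \<Omega> (topspace X \<inter> \<Inter>F) \<in> y" using insert.IH insert.prems by simp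
  show ?case using xh_int[OF insert.prems(2) a b] by (simp only: e down_Int[of x])
qed

lemma pattern: assumes y: "y \<in> Xhat \<Omega>" and F: "finite F" "F \<subseteq> \<Omega>"
  shows "\<exists>x\<in>topspace X. \<forall>W\<in>F. (down_base \<Omega> W \<in> y \<longleftrightarrow> x \<in> W)"
proof -
  define S where "S = {W\<in>F. down_base \<Omega> W \<in> y}"
  define V where "V = topspace X \<inter> \<Inter>S"
  define R where "R = \<Union>(F - S)"
  have Sf: "finite S" "S \<subseteq> \<Omega>" using F unfolding S_def by auto
  have Vy: "down_base \<Omega> V \<in> y" unfolding V_def using xh_Inter[OF Sf y] S_def by blast
  have R: "R \<in> \<Omega>" unfolding R_def using F by (intro Om_Union) auto
  have "\<not> V \<subseteq> R"
  proof
    assume "V \<subseteq> R"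
    then have "down_base \<Omega> R \<in> y" using xh_up[OF y Vy down_Idl[OF R]] down_mono by blast
    then obtain W where "W \<in> F - S" "down_base \<Omega> W \<in> y"
      using xh_Union[of "F - S" y] F y unfolding R_def by auto
    then show False unfolding S_def by blast
  qed
  then obtain x where x: "x \<in> V" "x \<notin> R" by blast
  show ?thesis
  proof (intro bexI ballI)
    show "x \<in> topspace X" using x V_def by blast
    fix W assume "W \<in> F"
    then show "(down_base \<Omega> W \<in> y) = (x \<in> W)" using x unfolding V_def R_def S_def by blast
  qed
qed

lemma iota_Xhat: assumes x: "x \<in> topspace X" shows "iota \<Omega> x \<in> Xhat \<Omega>"
  unfolding Xhat_def cp_filter_def
proof (intro CollectI conjI ballI allI impI)
  show "iota \<Omega> x \<subseteq> Idl \<Omega>" unfolding iota_def by blast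
  show "iota \<Omega> x \<noteq> {}" unfolding iota_def using Om_Idl Om_top x by blast
  fix I assume I: "I \<in> iota \<Omega> x"
  { fix J assume "J \<in> Idl \<Omega>" "I \<subseteq> J" then show "J \<in> iota \<Omega> x" using I unfolding iota_def by blast }
  { fix J assume J: "J \<in> iota \<Omega> x"
    obtain U V where "U \<in> I" "V \<in> J" "x \<in> U" "x \<in> V" using I J unfolding iota_def by blast
    moreover have "I \<in> Idl \<Omega>" "J \<in> Idl \<Omega>" using I J unfolding iota_def by auto
    ultimately have "U \<inter> V \<in> I \<inter> J" "x \<in> U \<inter> V"
      using idl_down idl_sub Om_Int by (blast, blast)
    then show "I \<inter> J \<in> iota \<Omega> x" using idl_Int \<open>I \<in> Idl \<Omega>\<close> \<open>J \<in> Idl \<Omega>\<close> unfolding iota_def by blast }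
next
  fix A assume A: "A \<subseteq> Idl \<Omega>" and s: "idl_Sup \<Omega> A \<in> iota \<Omega> x"
  define G where "G = {V\<in>\<Omega>. \<exists>F. finite F \<and> F \<subseteq> \<Union>A \<and> V \<subseteq> \<Union>F}"
  have G: "G \<in> Idl \<Omega>"
  proof (rule IdlI)
    show "G \<subseteq> \<Omega>" unfolding G_def by blast
    show "{} \<in> G" unfolding G_def using Om_empty by blast
    show "V \<in> G" if "U \<in> G" "V \<in> \<Omega>" "V \<subseteq> U" for U V using that unfolding G_def by blast
    show "U \<union> V \<in> G" if "U \<in> G" "V \<in> G" for U V
    proof -
      have "\<exists>F. finite F \<and> F \<subseteq> \<Union>A \<and> U \<subseteq> \<Union>F" using that(1) unfolding G_def by simp
      then obtain F1 where "finite F1" "F1 \<subseteq> \<Union>A" "U \<subseteq> \<Union>F1" by blast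
      have "\<exists>F. finite F \<and> F \<subseteq> \<Union>A \<and> V \<subseteq> \<Union>F" using that(2) unfolding G_def by simp
      then obtain F2 where "finite F2" "F2 \<subseteq> \<Union>A" "V \<subseteq> \<Union>F2" by blast
      note F12 = \<open>finite F1\<close> \<open>F1 \<subseteq> \<Union>A\<close> \<open>U \<subseteq> \<Union>F1\<close> this
      from F12 have h: "finite (F1 \<union> F2)" "F1 \<union> F2 \<subseteq> \<Union>A" "U \<union> V \<subseteq> \<Union>(F1 \<union> F2)" by auto
      have "U \<in> \<Omega>" "V \<in> \<Omega>" using that unfolding G_def by auto
      then have "U \<union> V \<in> \<Omega>" by (rule Om_Un)
      then show ?thesis using h unfolding G_def by blast
    qed
  qed
  have "\<Union>A \<subseteq> G" unfolding G_def using A idl_sub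
    by (auto intro!: exI[where x="{_}"])
  then have "idl_Sup \<Omega> A \<subseteq> G" using idl_Sup_least[OF G] by blast
  then obtain V where "V \<in> G" "x \<in> V" using s unfolding iota_def by blast
  then obtain F where "F \<subseteq> \<Union>A" "x \<in> \<Union>F" unfolding G_def by blast
  then show "A \<inter> iota \<Omega> x \<noteq> {}" using A unfolding iota_def by blast
qed

lemma iota_down: "W \<in> \<Omega> \<Longrightarrow> down_base \<Omega> W \<in> iota \<Omega> x \<longleftrightarrow> x \<in> W"
  unfolding iota_def using down_Idl down_mem by (auto simp: down_base_def)
lemma iota_out: "x \<notin> topspace X \<Longrightarrow> iota \<Omega> x \<notin> Xhat \<Omega>"
proof
  assume x: "x \<notin> topspace X" and "iota \<Omega> x \<in> Xhat \<Omega>"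
  then obtain I where "I \<in> iota \<Omega> x" using xh_ne by blast
  then have "I \<in> Idl \<Omega>" "x \<in> \<Union>I" unfolding iota_def by auto
  then obtain U where "U \<in> I" "x \<in> U" by blast
  then have "U \<in> \<Omega>" using idl_sub \<open>I \<in> Idl \<Omega>\<close> by blast
  then show False using Om_sub x \<open>x \<in> U\<close> by blast
qed

lemma Ohat_iff: "y \<in> Ohat \<Omega> I \<longleftrightarrow> y \<in> Xhat \<Omega> \<and> I \<in> y" by (simp add: Ohat_def)

lemma topspace_Xhat: "topspace (Xhat_top \<Omega>) = Xhat \<Omega>"
  unfolding Xhat_top_def topology_generated_by_topspace
  using xh_Om Om_Idl by (auto simp: Ohat_def)

end

context vb begin

lemma Ohat_mono: "I \<subseteq> J \<Longrightarrow> J \<in> Idl \<Omega> \<Longrightarrow> Ohat \<Omega> I \<subseteq> Ohat \<Omega> J"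
  unfolding Ohat_def using xh_up by blast

lemma idl_principal: assumes y: "y \<in> Xhat \<Omega>" and I: "I \<in> y"
  shows "\<exists>U\<in>I. down_base \<Omega> U \<in> y"
proof -
  have II: "I \<in> Idl \<Omega>" using xh_sub[OF y I] .
  define A where "A = (\<lambda>U. down_base \<Omega> U) ` I"
  have A: "A \<subseteq> Idl \<Omega>" unfolding A_def using down_Idl idl_sub[OF II] by blast
  have AO: "\<Union>A \<subseteq> \<Omega>" using A idl_sub by blast
  have "I \<subseteq> \<Union>A" unfolding A_def using down_mem idl_sub[OF II] by blast
  then have "I \<subseteq> idl_Sup \<Omega> A" using idl_Sup_upper[of A] by blast
  then have "idl_Sup \<Omega> A \<in> y" using xh_up[OF y I idl_Sup_Idl[OF AO]] by simp
  then obtain J where "J \<in> A" "J \<in> y" using xh_cp[OF y A] by blast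
  then show ?thesis unfolding A_def by blast
qed

lemma nbhd: assumes "openin (Xhat_top \<Omega>) V"
  shows "y \<in> V \<Longrightarrow> y \<in> Xhat \<Omega> \<Longrightarrow> \<exists>U\<in>\<Omega>. down_base \<Omega> U \<in> y \<and> Ohat \<Omega> (down_base \<Omega> U) \<subseteq> V"
proof -
  have "generate_topology_on {Ohat \<Omega> I | I. I \<in> Idl \<Omega>} V"
    using assms unfolding Xhat_top_def openin_topology_generated_by_iff .
  then show "y \<in> V \<Longrightarrow> y \<in> Xhat \<Omega> \<Longrightarrow> ?thesis"
  proof (induction arbitrary: y)
    case Empty then show ?case by simp
  next
    case (Int a b)
    then obtain U1 U2 where U: "U1 \<in> \<Omega>" "down_base \<Omega> U1 \<in> y" "Ohat \<Omega> (down_base \<Omega> U1) \<subseteq> a"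
      "U2 \<in> \<Omega>" "down_base \<Omega> U2 \<in> y" "Ohat \<Omega> (down_base \<Omega> U2) \<subseteq> b" by (meson IntD1 IntD2)
    have "down_base \<Omega> (U1 \<inter> U2) \<in> y" unfolding down_Int using xh_int[OF Int.prems(2)] U by simp
    moreover have "Ohat \<Omega> (down_base \<Omega> (U1 \<inter> U2)) \<subseteq> Ohat \<Omega> (down_base \<Omega> U1)"
      "Ohat \<Omega> (down_base \<Omega> (U1 \<inter> U2)) \<subseteq> Ohat \<Omega> (down_base \<Omega> U2)"
      using U(1,4) by (simp_all add: Ohat_mono down_Idl down_mono)
    ultimately show ?case using U Om_Int by (meson Int_greatest order_trans)
  next
    case (UN K)
    then obtain k where "k \<in> K" "y \<in> k" by blast
    then show ?case using UN.IH[of k y] UN.prems by blast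
  next
    case (Basis s)
    then obtain I where I: "I \<in> Idl \<Omega>" "s = Ohat \<Omega> I" by blast
    then have "I \<in> y" using Basis.prems by (simp add: Ohat_iff)
    then obtain U where U: "U \<in> I" "down_base \<Omega> U \<in> y" using idl_principal Basis.prems by blast
    have UO: "U \<in> \<Omega>" using U I idl_sub by blast
    have "down_base \<Omega> U \<subseteq> I" using idl_down[OF I(1) U(1)] unfolding down_base_def by blast
    then have "Ohat \<Omega> (down_base \<Omega> U) \<subseteq> s" using I Ohat_mono by simp
    then show ?case using U UO by blast
  qed
qed


lemma prime_ideal: assumes J: "J \<in> Idl \<Omega>" and W: "W \<in> \<Omega>" "W \<notin> J"
  shows "\<exists>P\<in>Idl \<Omega>. J \<subseteq> P \<and> W \<notin> P \<and> (\<forall>U\<in>\<Omega>. \<forall>V\<in>\<Omega>. U \<inter> V \<in> P \<longrightarrow> U \<in> P \<or> V \<in> P)"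
proof -
  define AA where "AA = {P\<in>Idl \<Omega>. J \<subseteq> P \<and> W \<notin> P}"
  have "\<exists>M\<in>AA. \<forall>X\<in>AA. M \<subseteq> X \<longrightarrow> X = M"
  proof (rule subset_Zorn_nonempty)
    show "AA \<noteq> {}" using J W unfolding AA_def by blast
    fix C assume C: "C \<noteq> {}" "subset.chain AA C"
    have Cs: "C \<subseteq> AA" and ch: "\<forall>P\<in>C. \<forall>Q\<in>C. P \<subseteq> Q \<or> Q \<subseteq> P"
      using C(2) unfolding subset_chain_def by auto
    have CI: "P \<in> Idl \<Omega>" if "P \<in> C" for P using that Cs unfolding AA_def by blast
    show "\<Union>C \<in> AA" unfolding AA_def
    proof (intro CollectI conjI)
      show "\<Union>C \<in> Idl \<Omega>"
      proof (rule IdlI)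
        show "\<Union>C \<subseteq> \<Omega>" using CI idl_sub by blast
        show "{} \<in> \<Union>C" using C(1) CI idl_empty by blast
        show "V \<in> \<Union>C" if "U \<in> \<Union>C" "V \<in> \<Omega>" "V \<subseteq> U" for U V
        proof -
          note th = that
          obtain P where "P \<in> C" "U \<in> P" using th(1) by blast
          then show ?thesis using idl_down[OF CI[OF \<open>P \<in> C\<close>] _ that(2,3)] by blast
        qed
        show "U \<union> V \<in> \<Union>C" if "U \<in> \<Union>C" "V \<in> \<Union>C" for U V
        proof -
          note th = that
          obtain P Q where PQ: "P \<in> C" "U \<in> P" "Q \<in> C" "V \<in> Q" using th by blast
          show ?thesis
          proof (cases "P \<subseteq> Q")
            case True
            then have "U \<union> V \<in> Q" using idl_Un[OF CI[OF PQ(3)]] PQ by blast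
            then show ?thesis using PQ by blast
          next
            case False
            then have "Q \<subseteq> P" using ch PQ by blast
            then have "U \<union> V \<in> P" using idl_Un[OF CI[OF PQ(1)]] PQ by blast
            then show ?thesis using PQ by blast
          qed
        qed
      qed
      show "J \<subseteq> \<Union>C" using C(1) Cs unfolding AA_def by blast
      show "W \<notin> \<Union>C" using Cs unfolding AA_def by blast
    qed
  qed
  then obtain M where M: "M \<in> AA" and max: "\<forall>X\<in>AA. M \<subseteq> X \<longrightarrow> X = M" by blast
  have MI: "M \<in> Idl \<Omega>" "J \<subseteq> M" "W \<notin> M" using M unfolding AA_def by auto
  have gen: "\<exists>p\<in>M. W \<subseteq> p \<union> U" if U: "U \<in> \<Omega>" "U \<notin> M" for U
  proof (rule ccontr)
    assume nW: "\<not> (\<exists>p\<in>M. W \<subseteq> p \<union> U)"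
    define G where "G = {Z\<in>\<Omega>. \<exists>p\<in>M. Z \<subseteq> p \<union> U}"
    have GI: "G \<in> Idl \<Omega>"
    proof (rule IdlI)
      show "G \<subseteq> \<Omega>" unfolding G_def by blast
      show "{} \<in> G" unfolding G_def using Om_empty idl_empty[OF MI(1)] by blast
      show "V \<in> G" if "Z \<in> G" "V \<in> \<Omega>" "V \<subseteq> Z" for Z V using that unfolding G_def by blast
      show "Z1 \<union> Z2 \<in> G" if "Z1 \<in> G" "Z2 \<in> G" for Z1 Z2
      proof -
        note th = that
        obtain p1 where p1: "p1 \<in> M" "Z1 \<subseteq> p1 \<union> U" using th(1) unfolding G_def by blast
        obtain p2 where p2: "p2 \<in> M" "Z2 \<subseteq> p2 \<union> U" using th(2) unfolding G_def by blast
        have "p1 \<union> p2 \<in> M" using idl_Un[OF MI(1) p1(1) p2(1)] .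
        moreover have "Z1 \<union> Z2 \<in> \<Omega>" using that Om_Un unfolding G_def by blast
        moreover have "Z1 \<union> Z2 \<subseteq> (p1 \<union> p2) \<union> U" using p1 p2 by blast
        ultimately show ?thesis unfolding G_def by blast
      qed
    qed
    have MG: "M \<subseteq> G" unfolding G_def using idl_sub[OF MI(1)] by blast
    have "W \<notin> G" using nW unfolding G_def by blast
    then have "G \<in> AA" using GI MI(2) MG unfolding AA_def by blast
    then have "G = M" using max MG by blast
    moreover have "U \<in> G" unfolding G_def using U(1) idl_empty[OF MI(1)] by blast
    ultimately show False using U(2) by blast
  qed
  have "\<forall>U\<in>\<Omega>. \<forall>V\<in>\<Omega>. U \<inter> V \<in> M \<longrightarrow> U \<in> M \<or> V \<in> M"
  proof (intro ballI impI)
    fix U V assume UV: "U \<in> \<Omega>" "V \<in> \<Omega>" "U \<inter> V \<in> M"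
    show "U \<in> M \<or> V \<in> M"
    proof (rule ccontr)
      assume "\<not> (U \<in> M \<or> V \<in> M)"
      then obtain p1 p2 where p: "p1 \<in> M" "W \<subseteq> p1 \<union> U" "p2 \<in> M" "W \<subseteq> p2 \<union> V"
        using gen UV by meson
      have "p1 \<union> p2 \<in> M" using idl_Un[OF MI(1) p(1) p(3)] .
      then have q: "(p1 \<union> p2) \<union> (U \<inter> V) \<in> M" using idl_Un[OF MI(1) _ UV(3)] by blast
      have "W \<subseteq> (p1 \<union> p2) \<union> (U \<inter> V)" using p by blast
      then have "W \<in> M" using idl_down[OF MI(1) q W(1)] by simp
      then show False using MI by simp
    qed
  qed
  then show ?thesis using MI by blast
qed

lemma prime_point: assumes P: "P \<in> Idl \<Omega>" "W \<in> \<Omega>" "W \<notin> P"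
  and pr: "\<forall>U\<in>\<Omega>. \<forall>V\<in>\<Omega>. U \<inter> V \<in> P \<longrightarrow> U \<in> P \<or> V \<in> P"
  and yd: "y = {I\<in>Idl \<Omega>. \<not> I \<subseteq> P}"
  shows "y \<in> Xhat \<Omega>"
  unfolding Xhat_def cp_filter_def
proof (intro CollectI conjI ballI allI impI)
  show "y \<subseteq> Idl \<Omega>" unfolding yd by blast
  show "y \<noteq> {}" unfolding yd using Om_Idl P by blast
  fix I assume I: "I \<in> y"
  { fix J assume "J \<in> Idl \<Omega>" "I \<subseteq> J" then show "J \<in> y" using I unfolding yd by blast }
  { fix J assume J: "J \<in> y"
    have II: "I \<in> Idl \<Omega>" "J \<in> Idl \<Omega>" using I J unfolding yd by auto
    obtain U V where UV: "U \<in> I" "U \<notin> P" "V \<in> J" "V \<notin> P" using I J unfolding yd by blast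
    have UVO: "U \<in> \<Omega>" "V \<in> \<Omega>" using UV II idl_sub by blast+
    then have "U \<inter> V \<in> \<Omega>" by (rule Om_Int)
    then have "U \<inter> V \<in> I" "U \<inter> V \<in> J" using idl_down II UV by blast+
    moreover have "U \<inter> V \<notin> P" using pr UVO UV by blast
    ultimately show "I \<inter> J \<in> y" using idl_Int[OF II] unfolding yd by blast }
next
  fix A assume A: "A \<subseteq> Idl \<Omega>" "idl_Sup \<Omega> A \<in> y"
  show "A \<inter> y \<noteq> {}"
  proof
    assume "A \<inter> y = {}"
    then have "\<Union>A \<subseteq> P" using A(1) unfolding yd by blast
    then have "idl_Sup \<Omega> A \<subseteq> P" using idl_Sup_least[OF P(1)] by blast
    then show False using A(2) unfolding yd by blast
  qed
qed

lemma Ohat_down_empty: "Ohat \<Omega> (down_base \<Omega> {}) = {}"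
  using xh_not_empty by (auto simp: Ohat_iff)

lemma compact_down: assumes W: "W \<in> \<Omega>" and ne: "VV \<noteq> {}"
  and op: "\<forall>V\<in>VV. openin (Xhat_top \<Omega>) V"
  and dir: "\<forall>V1\<in>VV. \<forall>V2\<in>VV. \<exists>V3\<in>VV. V1 \<union> V2 \<subseteq> V3"
  and cov: "Ohat \<Omega> (down_base \<Omega> W) \<subseteq> \<Union>VV"
  shows "\<exists>V\<in>VV. Ohat \<Omega> (down_base \<Omega> W) \<subseteq> V"
proof (rule ccontr)
  assume nc: "\<not> (\<exists>V\<in>VV. Ohat \<Omega> (down_base \<Omega> W) \<subseteq> V)"
  define J where "J = {U\<in>\<Omega>. \<exists>V\<in>VV. Ohat \<Omega> (down_base \<Omega> U) \<subseteq> V}"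
  have JI: "J \<in> Idl \<Omega>"
  proof (rule IdlI)
    show "J \<subseteq> \<Omega>" unfolding J_def by blast
    show "{} \<in> J" unfolding J_def using Om_empty Ohat_down_empty ne by blast
    show "V \<in> J" if "U \<in> J" "V \<in> \<Omega>" "V \<subseteq> U" for U V
    proof -
      note th = that
      obtain V' where V': "V' \<in> VV" "Ohat \<Omega> (down_base \<Omega> U) \<subseteq> V'" using th(1) unfolding J_def by blast
      have "U \<in> \<Omega>" using that(1) unfolding J_def by blast
      then have "Ohat \<Omega> (down_base \<Omega> V) \<subseteq> Ohat \<Omega> (down_base \<Omega> U)"
        using Ohat_mono[OF down_mono[OF that(3)] down_Idl] by blast
      then show ?thesis using V' that(2) unfolding J_def by blast
    qed
    show "U1 \<union> U2 \<in> J" if "U1 \<in> J" "U2 \<in> J" for U1 U2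
    proof -
      note th = that
      obtain V1 where V1: "V1 \<in> VV" "Ohat \<Omega> (down_base \<Omega> U1) \<subseteq> V1" using th(1) unfolding J_def by blast
      obtain V2 where V2: "V2 \<in> VV" "Ohat \<Omega> (down_base \<Omega> U2) \<subseteq> V2" using th(2) unfolding J_def by blast
      obtain V3 where V3: "V3 \<in> VV" "V1 \<union> V2 \<subseteq> V3" using dir V1 V2 by blast
      have U: "U1 \<in> \<Omega>" "U2 \<in> \<Omega>" using that unfolding J_def by blast+
      have "Ohat \<Omega> (down_base \<Omega> (U1 \<union> U2)) \<subseteq> Ohat \<Omega> (down_base \<Omega> U1) \<union> Ohat \<Omega> (down_base \<Omega> U2)"
      proof
        fix y assume "y \<in> Ohat \<Omega> (down_base \<Omega> (U1 \<union> U2))"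
        then have y: "y \<in> Xhat \<Omega>" "down_base \<Omega> (U1 \<union> U2) \<in> y" by (simp_all add: Ohat_iff)
        then show "y \<in> Ohat \<Omega> (down_base \<Omega> U1) \<union> Ohat \<Omega> (down_base \<Omega> U2)"
          using xh_Un[OF y(1) U y(2)] by (simp add: Ohat_iff)
      qed
      then have "Ohat \<Omega> (down_base \<Omega> (U1 \<union> U2)) \<subseteq> V3" using V1 V2 V3 by blast
      moreover have "U1 \<union> U2 \<in> \<Omega>" using Om_Un U by blast
      ultimately show ?thesis using V3 unfolding J_def by blast
    qed
  qed
  have "W \<notin> J" using nc unfolding J_def by blast
  then obtain P where P: "P \<in> Idl \<Omega>" "J \<subseteq> P" "W \<notin> P"
     and pr: "\<forall>U\<in>\<Omega>. \<forall>V\<in>\<Omega>. U \<inter> V \<in> P \<longrightarrow> U \<in> P \<or> V \<in> P"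
    using prime_ideal[OF JI W] by blast
  define y where "y = {I\<in>Idl \<Omega>. \<not> I \<subseteq> P}"
  have y: "y \<in> Xhat \<Omega>" by (rule prime_point[OF P(1) W P(3) pr y_def])
  have "down_base \<Omega> W \<in> y" unfolding y_def using down_Idl[OF W] down_mem[OF W] P(3) by blast
  then have "y \<in> Ohat \<Omega> (down_base \<Omega> W)" using y by (simp add: Ohat_iff)
  then obtain V where V: "V \<in> VV" "y \<in> V" using cov by blast
  then obtain U where U: "U \<in> \<Omega>" "down_base \<Omega> U \<in> y" "Ohat \<Omega> (down_base \<Omega> U) \<subseteq> V"
    using nbhd[of V y] op y by blast
  then have "U \<in> J" using V unfolding J_def by blast
  then have "U \<in> P" using P by blast
  then have "down_base \<Omega> U \<subseteq> P" using idl_down[OF P(1)] unfolding down_base_def by blast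
  then show False using U(2) unfolding y_def by blast
qed

end


lemma lub_upper: "is_lub_in P S x \<Longrightarrow> s \<in> S \<Longrightarrow> s \<le> x" by (simp add: is_lub_in_def)
lemma lub_least: "is_lub_in P S x \<Longrightarrow> u \<in> P \<Longrightarrow> (\<And>s. s \<in> S \<Longrightarrow> s \<le> u) \<Longrightarrow> x \<le> u"
  by (simp add: is_lub_in_def)
lemma lub_mem: "is_lub_in P S x \<Longrightarrow> x \<in> P" by (simp add: is_lub_in_def)
lemma lub_unique: "is_lub_in P S x \<Longrightarrow> is_lub_in P S x' \<Longrightarrow> x = x'"
  by (meson antisym lub_least lub_mem lub_upper)
lemma dlub_eq: "is_lub_in UNIV S x \<Longrightarrow> dlub S = x"
  unfolding dlub_def using lub_unique by blast

lemma wb_def2: "x \<lless> y \<longleftrightarrow> (\<forall>S s. dom_directed S \<longrightarrow> is_lub_in UNIV S s \<longrightarrow> y \<le> s \<longrightarrow> (\<exists>d\<in>S. x \<le> d))"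
  by (simp add: way_below_in_def)

lemma single_dir: "dom_directed {x}" by (simp add: dom_directed_def)
lemma single_lub: "is_lub_in UNIV {x} x" by (simp add: is_lub_in_def)

lemma wb_le: "a \<lless> b \<Longrightarrow> a \<le> b"
  unfolding wb_def2 using single_dir single_lub by fastforce

lemma wb_trans_le: "a \<le> b \<Longrightarrow> b \<lless> c \<Longrightarrow> c \<le> d \<Longrightarrow> a \<lless> d"
  unfolding wb_def2 by (meson order_trans)

lemma dir_ne: "dom_directed S \<Longrightarrow> S \<noteq> {}" by (simp add: dom_directed_def)
lemma dir_ub: "dom_directed S \<Longrightarrow> x \<in> S \<Longrightarrow> y \<in> S \<Longrightarrow> \<exists>z\<in>S. x \<le> z \<and> y \<le> z"
  by (simp add: dom_directed_def)

lemma wb_join2: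
  assumes "is_lub_in UNIV A1 a1" "a1 \<lless> z" "is_lub_in UNIV A2 a2" "a2 \<lless> z" "is_lub_in UNIV (A1 \<union> A2) a"
  shows "a \<lless> z"
  unfolding wb_def2
proof (intro allI impI)
  fix S s assume S: "dom_directed S" "is_lub_in UNIV S s" "z \<le> s"
  obtain d1 where d1: "d1 \<in> S" "a1 \<le> d1" using assms(2) S unfolding wb_def2 by blast
  obtain d2 where d2: "d2 \<in> S" "a2 \<le> d2" using assms(4) S unfolding wb_def2 by blast
  obtain d where d: "d \<in> S" "d1 \<le> d" "d2 \<le> d" using dir_ub[OF S(1) d1(1) d2(1)] by blast
  have "a \<le> d"
  proof (rule lub_least[OF assms(5)])
    show "d \<in> UNIV" by simp
    fix t assume "t \<in> A1 \<union> A2"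
    then show "t \<le> d"
    proof
      assume "t \<in> A1" then have "t \<le> a1" using lub_upper assms(1) by blast
      then show ?thesis using d1 d by (meson order_trans)
    next
      assume "t \<in> A2" then have "t \<le> a2" using lub_upper assms(3) by blast
      then show ?thesis using d2 d by (meson order_trans)
    qed
  qed
  then show "\<exists>d\<in>S. a \<le> d" using d by blast
qed

locale bcd = fixes D0 :: "'d::order set"
  assumes bc: "bc_domain_with_basis D0"
begin

lemma bc1: "\<forall>S::'d set. dom_directed S \<longrightarrow> (\<exists>s. is_lub_in UNIV S s)"
  using bc unfolding bc_domain_with_basis_def by (elim conjE) assumption
lemma bc2: "\<forall>S::'d set. (\<exists>u. \<forall>s\<in>S. s \<le> u) \<longrightarrow> (\<exists>s. is_lub_in UNIV S s)"
  using bc unfolding bc_domain_with_basis_def by (elim conjE) assumption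
lemma bc3: "\<forall>x. dom_directed {b\<in>D0. b \<lless> x} \<and> is_lub_in UNIV {b\<in>D0. b \<lless> x} x"
  using bc unfolding bc_domain_with_basis_def by (elim conjE) assumption
lemma dir_lub: "dom_directed (S::'d set) \<Longrightarrow> is_lub_in UNIV S (dlub S)"
proof -
  assume "dom_directed S"
  then obtain x where "is_lub_in UNIV S x" using bc1 by blast
  then show ?thesis using dlub_eq[of S x] by simp
qed
lemma bdd_lub: "(\<And>s. s \<in> (S::'d set) \<Longrightarrow> s \<le> u) \<Longrightarrow> is_lub_in UNIV S (dlub S)"
proof -
  assume "\<And>s. s \<in> S \<Longrightarrow> s \<le> u"
  then have "\<exists>u. \<forall>s\<in>S. s \<le> u" by blast
  then obtain x where "is_lub_in UNIV S x" using bc2 by blast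
  then show ?thesis using dlub_eq[of S x] by simp
qed
lemma approx_dir: "dom_directed {b\<in>D0. b \<lless> x}"
  using bc3 by blast
lemma approx_lub: "is_lub_in UNIV {b\<in>D0. b \<lless> x} x"
  using bc3 by blast

lemma dbot_lub: "is_lub_in UNIV {} (dbot::'d)"
  unfolding dbot_def by (rule bdd_lub) simp
lemma dbot_least: "dbot \<le> (x::'d)"
  using lub_least[OF dbot_lub] by simp
lemma dbot_wb: "dbot \<lless> (x::'d)"
  unfolding wb_def2 using dir_ne dbot_least by blast
lemma dlub_empty: "dlub {} = (dbot::'d)" by (simp add: dbot_def)

lemma interpolate: assumes xy: "x \<lless> (y::'d)" shows "\<exists>c\<in>D0. x \<lless> c \<and> c \<lless> y"
proof -
  define A where "A = {a\<in>D0. \<exists>c\<in>D0. a \<lless> c \<and> c \<lless> y}"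
  have Adir: "dom_directed A"
    unfolding dom_directed_def
  proof (intro conjI ballI)
    obtain c where c: "c \<in> D0" "c \<lless> y" using dir_ne[OF approx_dir[of y]] by blast
    obtain a where a: "a \<in> D0" "a \<lless> c" using dir_ne[OF approx_dir[of c]] by blast
    show "A \<noteq> {}" unfolding A_def using a c by blast
  next
    fix a1 a2 assume a: "a1 \<in> A" "a2 \<in> A"
    obtain c1 where c1: "c1 \<in> D0" "a1 \<lless> c1" "c1 \<lless> y" "a1 \<in> D0" using a(1) unfolding A_def by blast
    obtain c2 where c2: "c2 \<in> D0" "a2 \<lless> c2" "c2 \<lless> y" "a2 \<in> D0" using a(2) unfolding A_def by blast
    obtain c3 where c3: "c3 \<in> {b\<in>D0. b \<lless> y}" "c1 \<le> c3" "c2 \<le> c3"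
      using dir_ub[OF approx_dir[of y], of c1 c2] c1 c2 by blast
    have "a1 \<lless> c3" "a2 \<lless> c3" using wb_trans_le c1 c2 c3 by blast+
    then obtain a3 where a3: "a3 \<in> {b\<in>D0. b \<lless> c3}" "a1 \<le> a3" "a2 \<le> a3"
      using dir_ub[OF approx_dir[of c3], of a1 a2] c1 c2 by blast
    have "a3 \<in> A" unfolding A_def using a3 c3 by blast
    then show "\<exists>z\<in>A. a1 \<le> z \<and> a2 \<le> z" using a3 by blast
  qed
  have Alub: "is_lub_in UNIV A y"
    unfolding is_lub_in_def
  proof (intro conjI ballI allI impI)
    show "y \<in> UNIV" by simp
    fix a assume "a \<in> A"
    then obtain c where "a \<lless> c" "c \<lless> y" unfolding A_def by blast
    then show "a \<le> y" using wb_le order_trans by blast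
  next
    fix u assume u: "\<forall>s\<in>A. s \<le> u"
    have "c \<le> u" if c: "c \<in> {b\<in>D0. b \<lless> y}" for c
    proof (rule lub_least[OF approx_lub[of c]])
      show "u \<in> UNIV" by simp
      fix a assume "a \<in> {b\<in>D0. b \<lless> c}"
      then have "a \<in> A" unfolding A_def using c by blast
      then show "a \<le> u" using u by blast
    qed
    then show "y \<le> u" using lub_least[OF approx_lub[of y]] by blast
  qed
  obtain a where a: "a \<in> A" "x \<le> a" using xy Adir Alub unfolding wb_def2 by blast
  then obtain c where "c \<in> D0" "a \<lless> c" "c \<lless> y" unfolding A_def by blast
  then show ?thesis using a wb_trans_le by blast
qed

lemma wb_scott_open: "scott_open {d. b \<lless> (d::'d)}"
  unfolding scott_open_def
proof (intro conjI allI impI)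
  fix x y :: 'd assume "x \<in> {d. b \<lless> d}" "x \<le> y"
  then show "y \<in> {d. b \<lless> d}" using wb_trans_le by blast
next
  fix S s assume S: "dom_directed S" "is_lub_in UNIV S s" "s \<in> {d. b \<lless> d}"
  then obtain c where c: "b \<lless> c" "c \<lless> s" using interpolate by blast
  then obtain d where "d \<in> S" "c \<le> d" using S unfolding wb_def2 by blast
  then have "b \<lless> d" using c wb_trans_le by blast
  then show "S \<inter> {d. b \<lless> d} \<noteq> {}" using \<open>d \<in> S\<close> by blast
qed

end


lemma set_img: "{b i | i. i \<in> I \<and> P i} = b ` {i\<in>I. P i}" by auto

lemma step_cong: "{i\<in>I. y \<in> C i} = {i\<in>I. y' \<in> C' i} \<Longrightarrow> step_join I b C y = step_join I b C' y'"
  unfolding step_join_def set_img by simp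

lemma openin_top_Inter: "finite K \<Longrightarrow> (\<forall>k\<in>K. openin T (A k)) \<Longrightarrow> openin T (topspace T \<inter> (\<Inter>k\<in>K. A k))"
proof (induction K rule: finite_induct)
  case empty then show ?case by simp
next
  case (insert x F)
  have e: "topspace T \<inter> (\<Inter>k\<in>insert x F. A k) = A x \<inter> (topspace T \<inter> (\<Inter>k\<in>F. A k))" by auto
  show ?case unfolding e using insert by (simp add: openin_Int)
qed

context bcd begin

lemma step_lub: fixes b :: "nat \<Rightarrow> 'd" assumes "consistent_family I b C"
  shows "is_lub_in UNIV {b i | i. i \<in> I \<and> y \<in> C i} (step_join I b C y)"
proof -
  have "{i\<in>I. y \<in> C i} \<subseteq> I" by blast
  moreover have "y \<in> (\<Inter>j\<in>{i\<in>I. y \<in> C i}. C j)" by blast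
  ultimately obtain u where u: "\<forall>j\<in>{i\<in>I. y \<in> C i}. b j \<le> u"
    using assms unfolding consistent_family_def by blast
  have "is_lub_in UNIV {b i | i. i \<in> I \<and> y \<in> C i} (dlub {b i | i. i \<in> I \<and> y \<in> C i})"
    by (rule bdd_lub[of _ u]) (use u in blast)
  then show ?thesis unfolding step_join_def .
qed

lemma step_ge: fixes b :: "nat \<Rightarrow> 'd" shows "consistent_family I b C \<Longrightarrow> i \<in> I \<Longrightarrow> y \<in> C i \<Longrightarrow> b i \<le> step_join I b C y"
proof -
  assume a: "consistent_family I b C" "i \<in> I" "y \<in> C i"
  have "b i \<in> {b i | i. i \<in> I \<and> y \<in> C i}" using a by blast
  then show ?thesis by (rule lub_upper[OF step_lub[OF a(1)]])
qed

lemma step_le: fixes b :: "nat \<Rightarrow> 'd" shows "(\<And>i. i \<in> I \<Longrightarrow> y \<in> C i \<Longrightarrow> b i \<le> u) \<Longrightarrow> step_join I b C y \<le> u"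
proof -
  assume a: "\<And>i. i \<in> I \<Longrightarrow> y \<in> C i \<Longrightarrow> b i \<le> u"
  have "is_lub_in UNIV {b i | i. i \<in> I \<and> y \<in> C i} (dlub {b i | i. i \<in> I \<and> y \<in> C i})"
    by (rule bdd_lub[of _ u]) (use a in blast)
  then show ?thesis unfolding step_join_def by (rule lub_least) (use a in auto)
qed

lemma step_mono: fixes b :: "nat \<Rightarrow> 'd" shows "consistent_family I b C \<Longrightarrow> {i\<in>I. y \<in> C i} \<subseteq> {i\<in>I. y' \<in> C i}
  \<Longrightarrow> step_join I b C y \<le> step_join I b C y'"
proof -
  assume a: "consistent_family I b C" "{i\<in>I. y \<in> C i} \<subseteq> {i\<in>I. y' \<in> C i}"
  show ?thesis
  proof (rule step_le)
    fix i assume "i \<in> I" "y \<in> C i"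
    then show "b i \<le> step_join I b C y'" using a step_ge[OF a(1)] by blast
  qed
qed

lemma ptw_lub: fixes S :: "('x \<Rightarrow> 'd) set" assumes S: "S \<subseteq> cont_fun_space T" "dom_directed S" "is_lub_in (cont_fun_space T) S s"
  shows "is_lub_in UNIV {k y | k. k \<in> S} (s y)"
proof -
  define D where "D = (\<lambda>y. {k y | k. k \<in> S})"
  define h where "h = (\<lambda>y. dlub (D y))"
  have Ddir: "dom_directed (D y)" for y
    unfolding dom_directed_def D_def
  proof (intro conjI ballI)
    show "{k y |k. k \<in> S} \<noteq> {}" using dir_ne[OF S(2)] by blast
    fix a1 a2 assume "a1 \<in> {k y |k. k \<in> S}" "a2 \<in> {k y |k. k \<in> S}"
    then obtain k1 k2 where k: "k1 \<in> S" "k2 \<in> S" "a1 = k1 y" "a2 = k2 y" by blast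
    then obtain k3 where "k3 \<in> S" "k1 \<le> k3" "k2 \<le> k3" using dir_ub[OF S(2)] by blast
    then show "\<exists>z\<in>{k y |k. k \<in> S}. a1 \<le> z \<and> a2 \<le> z" using k by (auto simp: le_fun_def)
  qed
  have hl: "is_lub_in UNIV (D y) (h y)" for y unfolding h_def by (rule dir_lub[OF Ddir])
  have hc: "h \<in> cont_fun_space T"
    unfolding cont_fun_space_def
  proof (intro CollectI conjI allI impI)
    fix U :: "'d set" assume U: "scott_open U"
    have "{y \<in> topspace T. h y \<in> U} = (\<Union>k\<in>S. {y \<in> topspace T. k y \<in> U})"
    proof (intro equalityI subsetI)
      fix y assume y: "y \<in> {y \<in> topspace T. h y \<in> U}"
      then have "D y \<inter> U \<noteq> {}" using U Ddir hl unfolding scott_open_def by blast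
      then show "y \<in> (\<Union>k\<in>S. {y \<in> topspace T. k y \<in> U})" using y unfolding D_def by blast
    next
      fix y assume "y \<in> (\<Union>k\<in>S. {y \<in> topspace T. k y \<in> U})"
      then obtain k where k: "k \<in> S" "y \<in> topspace T" "k y \<in> U" by blast
      then have "k y \<le> h y" using lub_upper[OF hl] unfolding D_def by blast
      then have "h y \<in> U" using U k unfolding scott_open_def by blast
      then show "y \<in> {y \<in> topspace T. h y \<in> U}" using k by blast
    qed
    moreover have "openin T {y \<in> topspace T. k y \<in> U}" if "k \<in> S" for k
      using that S(1) U unfolding cont_fun_space_def by blast
    ultimately show "openin T {y \<in> topspace T. h y \<in> U}" by (metis (no_types, lifting) imageE openin_Union)
  next
    fix y assume y: "y \<notin> topspace T"
    have kb: "k y = dbot" if "k \<in> S" for k using that y S(1) unfolding cont_fun_space_def by blast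
    obtain k0 where k0: "k0 \<in> S" using dir_ne[OF S(2)] by blast
    have "D y = {dbot}"
    proof
      show "D y \<subseteq> {dbot}" unfolding D_def using kb by blast
      have "k0 y \<in> D y" unfolding D_def using k0 by blast
      then show "{dbot} \<subseteq> D y" using kb[OF k0] by simp
    qed
    then show "h y = dbot" unfolding h_def using dlub_eq[OF single_lub] by simp
  qed
  have "\<forall>k\<in>S. k \<le> h" unfolding le_fun_def using lub_upper[OF hl] unfolding D_def by blast
  then have sh: "s \<le> h" using lub_least[OF S(3) hc] by blast
  have "\<forall>k\<in>S. k \<le> s" using lub_upper[OF S(3)] by blast
  then have "h y \<le> s y" using lub_least[OF hl, of "s y"] unfolding D_def by (auto simp: le_fun_def)
  then have "s y = h y" using sh by (simp add: le_fun_def antisym)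
  then show ?thesis using hl unfolding D_def by simp
qed

end

locale setting = vb X \<Omega> + bcd D0 for X :: "'a topology" and \<Omega> and D0 :: "'d::order set"
begin

abbreviation CC :: "(nat \<Rightarrow> 'a set) \<Rightarrow> nat \<Rightarrow> 'a set set set set" where
  "CC W \<equiv> (\<lambda>i. Ohat \<Omega> (down_base \<Omega> (W i)))"

lemma hat_comp: assumes "\<forall>i\<in>I. W i \<in> \<Omega>"
  shows "step_join I b (CC W) \<circ> iota \<Omega> = step_join I b W"
proof
  fix x
  show "(step_join I b (CC W) \<circ> iota \<Omega>) x = step_join I b W x"
  proof (cases "x \<in> topspace X")
    case True
    have "\<forall>i\<in>I. (iota \<Omega> x \<in> CC W i) = (x \<in> W i)"
      using assms iota_Xhat[OF True] iota_down by (simp add: Ohat_iff)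
    then have "{i\<in>I. iota \<Omega> x \<in> CC W i} = {i\<in>I. x \<in> W i}" by (simp cong: conj_cong)
    then show ?thesis using step_cong[of I "iota \<Omega> x" "CC W" x W b] by simp
  next
    case False
    have "\<forall>i\<in>I. x \<notin> W i" using assms Om_sub False by blast
    moreover have "\<forall>i. iota \<Omega> x \<notin> CC W i" using iota_out[OF False] by (simp add: Ohat_iff)
    ultimately have "{i\<in>I. iota \<Omega> x \<in> CC W i} = {i\<in>I. x \<in> W i}" by (simp cong: conj_cong)
    then show ?thesis using step_cong[of I "iota \<Omega> x" "CC W" x W b] by simp
  qed
qed

lemma transfer: assumes y: "y \<in> Xhat \<Omega>" and x: "x \<in> topspace X"
  and W: "\<forall>i\<in>I. W i \<in> \<Omega> \<and> (down_base \<Omega> (W i) \<in> y \<longleftrightarrow> x \<in> W i)"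
  shows "step_join I b (CC W) y = step_join I b (CC W) (iota \<Omega> x)"
proof (rule step_cong)
  show "{i\<in>I. y \<in> CC W i} = {i\<in>I. iota \<Omega> x \<in> CC W i}"
  proof -
    have "\<forall>i\<in>I. (iota \<Omega> x \<in> CC W i) = (y \<in> CC W i)"
      using W y iota_Xhat[OF x] iota_down by (simp add: Ohat_iff)
    then show ?thesis by (simp cong: conj_cong)
  qed
qed

lemma out_val: fixes b :: "nat \<Rightarrow> 'd" shows "y \<notin> Xhat \<Omega> \<Longrightarrow> step_join I b (CC W) y = dbot"
proof -
  assume "y \<notin> Xhat \<Omega>"
  then have e: "{b i | i. i \<in> I \<and> y \<in> CC W i} = {}" by (auto simp: Ohat_iff)
  show ?thesis unfolding step_join_def e by (rule dlub_empty)
qed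

lemma basis_open: "I \<in> Idl \<Omega> \<Longrightarrow> openin (Xhat_top \<Omega>) (Ohat \<Omega> I)"
  unfolding Xhat_top_def openin_topology_generated_by_iff
  by (rule generate_topology_on.Basis) blast

lemma step_cont: fixes b :: "nat \<Rightarrow> 'd" assumes fin: "finite I" and W: "\<forall>i\<in>I. W i \<in> \<Omega>" and cons: "consistent_family I b (CC W)"
  shows "step_join I b (CC W) \<in> cont_fun_space (Xhat_top \<Omega>)"
  unfolding cont_fun_space_def topspace_Xhat
proof (intro CollectI conjI allI impI)
  let ?f = "step_join I b (CC W)"
  fix U :: "'d set" assume U: "scott_open U"
  define N where "N = (\<lambda>y'. Xhat \<Omega> \<inter> (\<Inter>i\<in>{i\<in>I. y' \<in> CC W i}. CC W i))"
  have "{y \<in> Xhat \<Omega>. ?f y \<in> U} = (\<Union>y'\<in>{y \<in> Xhat \<Omega>. ?f y \<in> U}. N y')"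
  proof (intro equalityI subsetI)
    fix y assume "y \<in> {y \<in> Xhat \<Omega>. ?f y \<in> U}"
    moreover then have "y \<in> N y" unfolding N_def by blast
    ultimately show "y \<in> (\<Union>y'\<in>{y \<in> Xhat \<Omega>. ?f y \<in> U}. N y')" by blast
  next
    fix y assume "y \<in> (\<Union>y'\<in>{y \<in> Xhat \<Omega>. ?f y \<in> U}. N y')"
    then obtain y' where y': "y' \<in> Xhat \<Omega>" "?f y' \<in> U" "y \<in> N y'" by blast
    then have "{i\<in>I. y' \<in> CC W i} \<subseteq> {i\<in>I. y \<in> CC W i}" unfolding N_def by blast
    then have "?f y' \<le> ?f y" by (rule step_mono[OF cons])
    then have "?f y \<in> U" using U y' unfolding scott_open_def by blast
    then show "y \<in> {y \<in> Xhat \<Omega>. ?f y \<in> U}" using y' unfolding N_def by blast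
  qed
  moreover have "openin (Xhat_top \<Omega>) (N y')" for y'
  proof -
    have "openin (Xhat_top \<Omega>) (topspace (Xhat_top \<Omega>) \<inter> (\<Inter>i\<in>{i\<in>I. y' \<in> CC W i}. CC W i))"
      using fin W by (intro openin_top_Inter) (auto intro: basis_open down_Idl)
    then show ?thesis unfolding N_def topspace_Xhat .
  qed
  ultimately show "openin (Xhat_top \<Omega>) {y \<in> Xhat \<Omega>. ?f y \<in> U}"
    by (metis (no_types, lifting) imageE openin_Union)
next
  fix y assume "y \<notin> Xhat \<Omega>"
  then show "step_join I b (CC W) y = dbot" by (rule out_val)
qed

end


lemma dir_fin_ub: assumes S: "dom_directed (S :: ('x \<Rightarrow> 'e::order) set)"
  shows "finite F \<Longrightarrow> F \<subseteq> S \<Longrightarrow> \<exists>d\<in>S. \<forall>k\<in>F. k \<le> d"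
proof (induction F rule: finite_induct)
  case empty then show ?case using dir_ne[OF S] by blast
next
  case (insert x F)
  then obtain d where d: "d \<in> S" "\<forall>k\<in>F. k \<le> d" by blast
  obtain d' where "d' \<in> S" "x \<le> d'" "d \<le> d'" using dir_ub[OF S, of x d] insert.prems d by blast
  then have "\<forall>k\<in>insert x F. k \<le> d'" using d order_trans by blast
  then show ?case using \<open>d' \<in> S\<close> by blast
qed

lemma ptw_dir: assumes S: "dom_directed (S :: ('x \<Rightarrow> 'e::order) set)"
  shows "dom_directed {k y | k. k \<in> S}"
  unfolding dom_directed_def
proof (intro conjI ballI)
  show "{k y |k. k \<in> S} \<noteq> {}" using dir_ne[OF S] by blast
  fix a1 a2 assume "a1 \<in> {k y |k. k \<in> S}" "a2 \<in> {k y |k. k \<in> S}"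
  then obtain k1 k2 where k: "k1 \<in> S" "k2 \<in> S" "a1 = k1 y" "a2 = k2 y" by blast
  then obtain k3 where "k3 \<in> S" "k1 \<le> k3" "k2 \<le> k3" using dir_ub[OF S] by blast
  then show "\<exists>z\<in>{k y |k. k \<in> S}. a1 \<le> z \<and> a2 \<le> z" using k by (auto simp: le_fun_def)
qed

context setting begin

lemma BhatE: "f \<in> Bhat \<Omega> D0 \<Longrightarrow> \<exists>I b W. f = step_join I b (CC W) \<and> finite I \<and> (\<forall>i\<in>I. W i \<in> \<Omega> \<and> b i \<in> D0)
   \<and> consistent_family I b (CC W)"
  unfolding Bhat_def by blast
lemma BhatI: "finite I \<Longrightarrow> (\<forall>i\<in>I. W i \<in> \<Omega> \<and> b i \<in> D0) \<Longrightarrow> consistent_family I b (CC W)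
   \<Longrightarrow> step_join I b (CC W) \<in> Bhat \<Omega> D0"
  unfolding Bhat_def by blast
lemma BabsE: "f \<in> B_abs \<Omega> D0 \<Longrightarrow> \<exists>I b W. f = step_join I b W \<and> finite I \<and> (\<forall>i\<in>I. W i \<in> \<Omega> \<and> b i \<in> D0)
   \<and> consistent_family I b W"
  unfolding B_abs_def by blast
lemma BabsI: "finite I \<Longrightarrow> (\<forall>i\<in>I. W i \<in> \<Omega> \<and> b i \<in> D0) \<Longrightarrow> consistent_family I b W
   \<Longrightarrow> step_join I b W \<in> B_abs \<Omega> D0"
  unfolding B_abs_def by blast

lemma cons_abs_of_hat: assumes W: "\<forall>i\<in>I. W i \<in> \<Omega>" and c: "consistent_family I b (CC W)"
  shows "consistent_family I b W"
  unfolding consistent_family_def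
proof (intro allI impI)
  fix J assume J: "J \<subseteq> I" "(\<Inter>j\<in>J. W j) \<noteq> {}"
  show "\<exists>u. \<forall>j\<in>J. b j \<le> u"
  proof (cases "J = {}")
    case True then show ?thesis by blast
  next
    case False
    then obtain j0 where j0: "j0 \<in> J" by blast
    obtain x where x: "x \<in> (\<Inter>j\<in>J. W j)" using J by blast
    then have xt: "x \<in> topspace X" using j0 J W Om_sub by blast
    have "iota \<Omega> x \<in> (\<Inter>j\<in>J. CC W j)"
      using x J W iota_Xhat[OF xt] iota_down by (auto simp: Ohat_iff)
    then have "(\<Inter>j\<in>J. CC W j) \<noteq> {}" by blast
    then show ?thesis using c J unfolding consistent_family_def by blast
  qed
qed

lemma cons_hat_of_abs: assumes fin: "finite I" and W: "\<forall>i\<in>I. W i \<in> \<Omega>" and c: "consistent_family I b W"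
  shows "consistent_family I b (CC W)"
  unfolding consistent_family_def
proof (intro allI impI)
  fix J assume J: "J \<subseteq> I" "(\<Inter>j\<in>J. CC W j) \<noteq> {}"
  show "\<exists>u. \<forall>j\<in>J. b j \<le> u"
  proof (cases "J = {}")
    case True then show ?thesis by blast
  next
    case False
    then obtain j0 where j0: "j0 \<in> J" by blast
    obtain y where y: "y \<in> (\<Inter>j\<in>J. CC W j)" using J by blast
    then have yX: "y \<in> Xhat \<Omega>" using j0 by (auto simp: Ohat_iff)
    have F1: "finite (W ` I)" using fin by simp
    have F2: "W ` I \<subseteq> \<Omega>" unfolding image_subset_iff using W by simp
    obtain x where x: "x \<in> topspace X" "\<forall>V\<in>W ` I. (down_base \<Omega> V \<in> y \<longleftrightarrow> x \<in> V)"
      using pattern[OF yX F1 F2] by (elim bexE) 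
    have "x \<in> (\<Inter>j\<in>J. W j)"
    proof
      fix j assume "j \<in> J"
      then have "down_base \<Omega> (W j) \<in> y" "W j \<in> W ` I" using y J by (auto simp: Ohat_iff)
      then show "x \<in> W j" using x by blast
    qed
    then have "(\<Inter>j\<in>J. W j) \<noteq> {}" by blast
    then show ?thesis using c J unfolding consistent_family_def by blast
  qed
qed

lemma hat_inj: "inj_on (\<lambda>f. f \<circ> iota \<Omega>) (Bhat \<Omega> D0)"
proof (rule inj_onI)
  fix f g assume f: "f \<in> Bhat \<Omega> D0" and g: "g \<in> Bhat \<Omega> D0" and e: "f \<circ> iota \<Omega> = g \<circ> iota \<Omega>"
  obtain I1 b1 W1 where f1: "f = step_join I1 b1 (CC W1)" "finite I1" "\<forall>i\<in>I1. W1 i \<in> \<Omega> \<and> b1 i \<in> D0"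
    using BhatE[OF f] by blast
  obtain I2 b2 W2 where g1: "g = step_join I2 b2 (CC W2)" "finite I2" "\<forall>i\<in>I2. W2 i \<in> \<Omega> \<and> b2 i \<in> D0"
    using BhatE[OF g] by blast
  show "f = g"
  proof
    fix y
    show "f y = g y"
    proof (cases "y \<in> Xhat \<Omega>")
      case False
      then show ?thesis unfolding f1(1) g1(1) using out_val by simp
    next
      case True
      have F1: "finite (W1 ` I1 \<union> W2 ` I2)" using f1(2) g1(2) by simp
      have F2: "W1 ` I1 \<union> W2 ` I2 \<subseteq> \<Omega>" unfolding Un_subset_iff image_subset_iff using f1(3) g1(3) by simp
      obtain x where x: "x \<in> topspace X" "\<forall>V\<in>W1 ` I1 \<union> W2 ` I2. (down_base \<Omega> V \<in> y \<longleftrightarrow> x \<in> V)"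
        using pattern[OF True F1 F2] by (elim bexE) 
      have "f y = f (iota \<Omega> x)" unfolding f1(1) by (rule transfer[OF True x(1)]) (use x f1 in blast)
      also have "\<dots> = g (iota \<Omega> x)" using e by (metis comp_apply)
      also have "\<dots> = g y" unfolding g1(1) by (rule transfer[OF True x(1), symmetric]) (use x g1 in blast)
      finally show ?thesis .
    qed
  qed
qed

lemma hat_image: "(\<lambda>f. f \<circ> iota \<Omega>) ` Bhat \<Omega> D0 = B_abs \<Omega> D0"
proof (intro equalityI subsetI)
  fix h assume "h \<in> (\<lambda>f. f \<circ> iota \<Omega>) ` Bhat \<Omega> D0"
  then obtain f where f: "f \<in> Bhat \<Omega> D0" "h = f \<circ> iota \<Omega>" by blast
  obtain I b W where f1: "f = step_join I b (CC W)" "finite I" "\<forall>i\<in>I. W i \<in> \<Omega> \<and> b i \<in> D0"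
     "consistent_family I b (CC W)"
    using BhatE[OF f(1)] by blast
  have WO: "\<forall>i\<in>I. W i \<in> \<Omega>" using f1(3) by blast
  have "h = step_join I b W" using f(2) f1(1) hat_comp[OF WO] by simp
  moreover have "consistent_family I b W" using cons_abs_of_hat f1 by blast
  ultimately show "h \<in> B_abs \<Omega> D0" using BabsI f1 by simp
next
  fix h assume "h \<in> B_abs \<Omega> D0"
  then obtain I b W where h1: "h = step_join I b W" "finite I" "\<forall>i\<in>I. W i \<in> \<Omega> \<and> b i \<in> D0"
     "consistent_family I b W"
    using BabsE by blast
  have c: "consistent_family I b (CC W)" using cons_hat_of_abs h1 by blast
  have "step_join I b (CC W) \<in> Bhat \<Omega> D0" using BhatI h1 c by blast
  moreover have WO: "\<forall>i\<in>I. W i \<in> \<Omega>" using h1(3) by blast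
  moreover have "h = step_join I b (CC W) \<circ> iota \<Omega>" using h1(1) hat_comp[OF WO, of b] by simp
  ultimately show "h \<in> (\<lambda>f. f \<circ> iota \<Omega>) ` Bhat \<Omega> D0" by blast
qed

end


lemma merge_set: fixes I1 I2 :: "nat set" shows
  "{(if even i then b1 (i div 2) else b2 (i div 2)) | i.
      i \<in> ((\<lambda>i. 2*i) ` I1 \<union> (\<lambda>i. 2*i+1) ` I2) \<and> (if even i then P1 (i div 2) else P2 (i div 2))}
   = {b1 i | i. i \<in> I1 \<and> P1 i} \<union> {b2 i | i. i \<in> I2 \<and> P2 i}"
proof (intro equalityI subsetI)
  fix z assume "z \<in> {(if even i then b1 (i div 2) else b2 (i div 2)) | i.
      i \<in> ((\<lambda>i. 2*i) ` I1 \<union> (\<lambda>i. 2*i+1) ` I2) \<and> (if even i then P1 (i div 2) else P2 (i div 2))}"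
  then obtain i where i: "z = (if even i then b1 (i div 2) else b2 (i div 2))"
    "i \<in> ((\<lambda>i. 2*i) ` I1 \<union> (\<lambda>i. 2*i+1) ` I2)" "(if even i then P1 (i div 2) else P2 (i div 2))" by blast
  from i(2) show "z \<in> {b1 i | i. i \<in> I1 \<and> P1 i} \<union> {b2 i | i. i \<in> I2 \<and> P2 i}"
  proof
    assume "i \<in> (\<lambda>i. 2*i) ` I1"
    then obtain j where "j \<in> I1" "i = 2*j" by blast
    then show ?thesis using i by auto
  next
    assume "i \<in> (\<lambda>i. 2*i+1) ` I2"
    then obtain j where "j \<in> I2" "i = 2*j+1" by blast
    then show ?thesis using i by auto
  qed
next
  fix z assume "z \<in> {b1 i | i. i \<in> I1 \<and> P1 i} \<union> {b2 i | i. i \<in> I2 \<and> P2 i}"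
  then show "z \<in> {(if even i then b1 (i div 2) else b2 (i div 2)) | i.
      i \<in> ((\<lambda>i. 2*i) ` I1 \<union> (\<lambda>i. 2*i+1) ` I2) \<and> (if even i then P1 (i div 2) else P2 (i div 2))}"
  proof
    assume "z \<in> {b1 i | i. i \<in> I1 \<and> P1 i}"
    then obtain j where j: "j \<in> I1" "P1 j" "z = b1 j" by blast
    have "2*j \<in> ((\<lambda>i. 2*i) ` I1 \<union> (\<lambda>i. 2*i+1) ` I2)" using j by blast
    moreover have "z = (if even (2*j) then b1 (2*j div 2) else b2 (2*j div 2))" using j by simp
    moreover have "(if even (2*j) then P1 (2*j div 2) else P2 (2*j div 2))" using j by simp
    ultimately show ?thesis by blast
  next
    assume "z \<in> {b2 i | i. i \<in> I2 \<and> P2 i}"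
    then obtain j where j: "j \<in> I2" "P2 j" "z = b2 j" by blast
    have "2*j+1 \<in> ((\<lambda>i. 2*i) ` I1 \<union> (\<lambda>i. 2*i+1) ` I2)" using j by blast
    moreover have "z = (if even (2*j+1) then b1 ((2*j+1) div 2) else b2 ((2*j+1) div 2))" using j by simp
    moreover have "(if even (2*j+1) then P1 ((2*j+1) div 2) else P2 ((2*j+1) div 2))" using j by simp
    ultimately show ?thesis by blast
  qed
qed

context setting begin

lemma BP: "h \<in> Bhat \<Omega> D0 \<Longrightarrow> h \<in> cont_fun_space (Xhat_top \<Omega>)"
proof -
  assume "h \<in> Bhat \<Omega> D0"
  then obtain I b W where h: "h = step_join I b (CC W)" "finite I" "\<forall>i\<in>I. W i \<in> \<Omega> \<and> b i \<in> D0"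
     "consistent_family I b (CC W)" using BhatE by blast
  have "\<forall>i\<in>I. W i \<in> \<Omega>" using h(3) by blast
  then show ?thesis unfolding h(1) using step_cont h(2,4) by blast
qed


lemma wb_to_prec:
  assumes f: "f \<in> Bhat \<Omega> D0" and g: "g \<in> Bhat \<Omega> D0"
    and wb: "way_below_in (cont_fun_space (Xhat_top \<Omega>)) f g"
  shows "abs_prec \<Omega> D0 (f \<circ> iota \<Omega>) (g \<circ> iota \<Omega>)"
proof -
  obtain I b W where f1: "f = step_join I b (CC W)" "finite I" "\<forall>i\<in>I. W i \<in> \<Omega> \<and> b i \<in> D0"
     "consistent_family I b (CC W)" using BhatE[OF f] by blast
  obtain I2 b2 W2 where g1: "g = step_join I2 b2 (CC W2)" "finite I2" "\<forall>i\<in>I2. W2 i \<in> \<Omega> \<and> b2 i \<in> D0"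
     "consistent_family I2 b2 (CC W2)" using BhatE[OF g] by blast
  let ?P = "cont_fun_space (Xhat_top \<Omega>)"
  define S where "S = {h \<in> Bhat \<Omega> D0. \<forall>y. h y \<lless> g y}"
  have SP: "S \<subseteq> ?P" using BP unfolding S_def by blast
  have gle: "h \<le> g" if "h \<in> S" for h
    using that wb_le unfolding S_def le_fun_def by blast
  have Sdir: "dom_directed S"
    unfolding dom_directed_def
  proof (intro conjI ballI)
    have "step_join {} b (CC W) \<in> Bhat \<Omega> D0" by (rule BhatI) (auto simp: consistent_family_def)
    moreover have "step_join {} b (CC W) y \<lless> g y" for y
      unfolding step_join_def using dlub_empty dbot_wb by simp
    ultimately show "S \<noteq> {}" unfolding S_def by blast
  next
    fix h1 h2 assume h: "h1 \<in> S" "h2 \<in> S"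
    obtain J1 c1 V1 where h1: "h1 = step_join J1 c1 (CC V1)" "finite J1" "\<forall>i\<in>J1. V1 i \<in> \<Omega> \<and> c1 i \<in> D0"
       "consistent_family J1 c1 (CC V1)" using BhatE h(1) unfolding S_def by blast
    obtain J2 c2 V2 where h2: "h2 = step_join J2 c2 (CC V2)" "finite J2" "\<forall>i\<in>J2. V2 i \<in> \<Omega> \<and> c2 i \<in> D0"
       "consistent_family J2 c2 (CC V2)" using BhatE h(2) unfolding S_def by blast
    have h1w: "h1 y \<lless> g y" for y using h(1) unfolding S_def by blast
    have h2w: "h2 y \<lless> g y" for y using h(2) unfolding S_def by blast
    define J3 where "J3 = (\<lambda>i. 2*i) ` J1 \<union> (\<lambda>i. 2*i+1) ` J2"
    define c3 where "c3 = (\<lambda>i::nat. if even i then c1 (i div 2) else c2 (i div 2))"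
    define V3 where "V3 = (\<lambda>i::nat. if even i then V1 (i div 2) else V2 (i div 2))"
    define A1 where "A1 = (\<lambda>y. {c1 i | i. i \<in> J1 \<and> y \<in> CC V1 i})"
    define A2 where "A2 = (\<lambda>y. {c2 i | i. i \<in> J2 \<and> y \<in> CC V2 i})"
    have mem: "(y \<in> CC V3 i) = (if even i then y \<in> CC V1 (i div 2) else y \<in> CC V2 (i div 2))" for y i
      by (simp add: V3_def)
    have setq: "{c3 i | i. i \<in> J3 \<and> y \<in> CC V3 i} = A1 y \<union> A2 y" for y
      unfolding mem c3_def J3_def A1_def A2_def by (rule merge_set)
    have l1: "is_lub_in UNIV (A1 y) (h1 y)" for y unfolding A1_def h1(1) by (rule step_lub[OF h1(4)])
    have l2: "is_lub_in UNIV (A2 y) (h2 y)" for y unfolding A2_def h2(1) by (rule step_lub[OF h2(4)])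
    have bnd: "a \<le> g y" if "a \<in> A1 y \<union> A2 y" for a y
    proof -
      from that show ?thesis
      proof
        assume "a \<in> A1 y" then have "a \<le> h1 y" using lub_upper[OF l1] by blast
        then show ?thesis using wb_le[OF h1w] order_trans by blast
      next
        assume "a \<in> A2 y" then have "a \<le> h2 y" using lub_upper[OF l2] by blast
        then show ?thesis using wb_le[OF h2w] order_trans by blast
      qed
    qed
    define h3 where "h3 = step_join J3 c3 (CC V3)"
    have l3: "is_lub_in UNIV (A1 y \<union> A2 y) (h3 y)" for y
    proof -
      have "is_lub_in UNIV (A1 y \<union> A2 y) (dlub (A1 y \<union> A2 y))" by (rule bdd_lub[of _ "g y"]) (rule bnd)
      then show ?thesis unfolding h3_def step_join_def setq .
    qed
    have cons3: "consistent_family J3 c3 (CC V3)"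
      unfolding consistent_family_def
    proof (intro allI impI)
      fix J assume J: "J \<subseteq> J3" "(\<Inter>j\<in>J. CC V3 j) \<noteq> {}"
      then obtain y where y: "y \<in> (\<Inter>j\<in>J. CC V3 j)" by blast
      have "c3 j \<le> g y" if "j \<in> J" for j
      proof -
        have "c3 j \<in> {c3 i | i. i \<in> J3 \<and> y \<in> CC V3 i}" using that J y by blast
        then show ?thesis unfolding setq by (rule bnd)
      qed
      then show "\<exists>u. \<forall>j\<in>J. c3 j \<le> u" by blast
    qed
    have fin3: "finite J3" unfolding J3_def using h1(2) h2(2) by simp
    have ok3: "\<forall>i\<in>J3. V3 i \<in> \<Omega> \<and> c3 i \<in> D0"
    proof
      fix i assume "i \<in> J3"
      then show "V3 i \<in> \<Omega> \<and> c3 i \<in> D0" unfolding J3_def V3_def c3_def using h1(3) h2(3) by auto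
    qed
    have h3B: "h3 \<in> Bhat \<Omega> D0" unfolding h3_def by (rule BhatI[OF fin3 ok3 cons3])
    have h3w: "h3 y \<lless> g y" for y by (rule wb_join2[OF l1 h1w l2 h2w l3])
    have h3S: "h3 \<in> S" unfolding S_def using h3B h3w by blast
    have "h1 \<le> h3"
    proof (rule le_funI)
      fix y show "h1 y \<le> h3 y" by (rule lub_least[OF l1]) (use lub_upper[OF l3] in blast)+
    qed
    moreover have "h2 \<le> h3"
    proof (rule le_funI)
      fix y show "h2 y \<le> h3 y" by (rule lub_least[OF l2]) (use lub_upper[OF l3] in blast)+
    qed
    ultimately show "\<exists>z\<in>S. h1 \<le> z \<and> h2 \<le> z" using h3S by blast
  qed
  have Slub: "is_lub_in ?P S g"
    unfolding is_lub_in_def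
  proof (intro conjI ballI allI impI)
    show "g \<in> ?P" by (rule BP[OF g])
    show "h \<le> g" if "h \<in> S" for h using gle that by blast
  next
    fix u assume u: "u \<in> ?P" "\<forall>h\<in>S. h \<le> u"
    show "g \<le> u"
    proof (rule le_funI)
      fix y show "g y \<le> u y"
      proof (cases "y \<in> Xhat \<Omega>")
        case False
        then have "g y = dbot" unfolding g1(1) by (rule out_val)
        then show ?thesis using dbot_least by simp
      next
        case True
        define T where "T = {i\<in>I2. y \<in> CC W2 i}"
        define V where "V = topspace X \<inter> \<Inter>(W2 ` T)"
        have Tf: "finite (W2 ` T)" unfolding T_def using g1(2) by simp
        have TO: "W2 ` T \<subseteq> \<Omega>" unfolding T_def image_subset_iff using g1(3) by simp
        have VO: "V \<in> \<Omega>" unfolding V_def by (rule Om_Inter[OF Tf TO])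
        have Ty: "\<forall>V'\<in>W2 ` T. down_base \<Omega> V' \<in> y" unfolding T_def by (auto simp: Ohat_iff)
        have Vy: "down_base \<Omega> V \<in> y" unfolding V_def by (rule xh_Inter[OF Tf TO True Ty])
        have "c \<le> u y" if c: "c \<in> D0" "c \<lless> g y" for c
        proof -
          define hc where "hc = step_join {0::nat} (\<lambda>_. c) (CC (\<lambda>_. V))"
          have hcB: "hc \<in> Bhat \<Omega> D0" unfolding hc_def
            by (rule BhatI) (use VO c in \<open>auto simp: consistent_family_def\<close>)
          have hcv: "hc y' = (if y' \<in> Ohat \<Omega> (down_base \<Omega> V) then c else dbot)" for y'
          proof (cases "y' \<in> Ohat \<Omega> (down_base \<Omega> V)")
            case True
            then have "{(\<lambda>_. c) i | i. i \<in> {0::nat} \<and> y' \<in> CC (\<lambda>_. V) i} = {c}" by auto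
            then show ?thesis unfolding hc_def step_join_def using True dlub_eq[OF single_lub] by simp
          next
            case False
            then have "{(\<lambda>_. c) i | i. i \<in> {0::nat} \<and> y' \<in> CC (\<lambda>_. V) i} = {}" by auto
            then show ?thesis unfolding hc_def step_join_def using False dlub_empty by simp
          qed
          have hcw: "hc y' \<lless> g y'" for y'
          proof (cases "y' \<in> Ohat \<Omega> (down_base \<Omega> V)")
            case True
            then have y': "y' \<in> Xhat \<Omega>" "down_base \<Omega> V \<in> y'" by (simp_all add: Ohat_iff)
            have "T \<subseteq> {i\<in>I2. y' \<in> CC W2 i}"
            proof
              fix i assume i: "i \<in> T"
              then have "V \<subseteq> W2 i" "W2 i \<in> \<Omega>" "i \<in> I2" unfolding V_def T_def using g1(3) by auto
              then have "down_base \<Omega> (W2 i) \<in> y'"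
                using xh_up[OF y'(1) y'(2) down_Idl] down_mono by blast
              then show "i \<in> {i\<in>I2. y' \<in> CC W2 i}" using y'(1) \<open>i \<in> I2\<close> by (simp add: Ohat_iff)
            qed
            then have "g y \<le> g y'" unfolding g1(1) T_def by (rule step_mono[OF g1(4)])
            then have "c \<lless> g y'" using wb_trans_le[OF order_refl c(2)] by blast
            then show ?thesis using hcv True by simp
          next
            case False
            then show ?thesis using hcv dbot_wb by simp
          qed
          have "hc \<in> S" unfolding S_def using hcB hcw by blast
          then have "hc \<le> u" using u by blast
          then have "hc y \<le> u y" by (simp add: le_fun_def)
          moreover have "hc y = c" using hcv True Vy by (simp add: Ohat_iff)
          ultimately show ?thesis by simp
        qed
        then show "g y \<le> u y" using lub_least[OF approx_lub[of "g y"]] by blast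
      qed
    qed
  qed
  obtain d where d: "d \<in> S" "f \<le> d"
    using wb[unfolded way_below_in_def, rule_format, OF SP Sdir Slub order_refl] by blast
  have WO: "\<forall>i\<in>I. W i \<in> \<Omega>" using f1(3) by blast
  show ?thesis unfolding abs_prec_def
  proof (intro exI conjI)
    show "finite I" by (rule f1(2))
    show "\<forall>i\<in>I. W i \<in> \<Omega> \<and> b i \<in> D0" by (rule f1(3))
    show "consistent_family I b W" by (rule cons_abs_of_hat[OF WO f1(4)])
    show "f \<circ> iota \<Omega> = step_join I b W" unfolding f1(1) by (rule hat_comp[OF WO])
    show "\<forall>i\<in>I. W i \<subseteq> (g \<circ> iota \<Omega>) -` {d. b i \<lless> d}"
    proof (intro ballI subsetI)
      fix i x assume i: "i \<in> I" and x: "x \<in> W i"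
      have xt: "x \<in> topspace X" using x i WO Om_sub by blast
      have "iota \<Omega> x \<in> CC W i" using iota_Xhat[OF xt] iota_down[of "W i" x] x i WO by (simp add: Ohat_iff)
      then have "b i \<le> f (iota \<Omega> x)" unfolding f1(1) by (rule step_ge[OF f1(4) i])
      also have "\<dots> \<le> d (iota \<Omega> x)" using d(2) by (simp add: le_fun_def)
      finally have "b i \<le> d (iota \<Omega> x)" .
      moreover have "d (iota \<Omega> x) \<lless> g (iota \<Omega> x)" using d(1) unfolding S_def by blast
      ultimately have "b i \<lless> g (iota \<Omega> x)" using wb_trans_le[OF _ _ order_refl] by blast
      then show "x \<in> (g \<circ> iota \<Omega>) -` {d. b i \<lless> d}" by simp
    qed
  qed
qed


lemma prec_to_wb:
  assumes f: "f \<in> Bhat \<Omega> D0" and g: "g \<in> Bhat \<Omega> D0"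
    and pr: "abs_prec \<Omega> D0 (f \<circ> iota \<Omega>) (g \<circ> iota \<Omega>)"
  shows "way_below_in (cont_fun_space (Xhat_top \<Omega>)) f g"
proof -
  let ?P = "cont_fun_space (Xhat_top \<Omega>)"
  obtain I b Os where o: "finite I" "\<forall>i\<in>I. Os i \<in> \<Omega> \<and> b i \<in> D0" "consistent_family I b Os"
    "f \<circ> iota \<Omega> = step_join I b Os" "\<forall>i\<in>I. Os i \<subseteq> (g \<circ> iota \<Omega>) -` {d. b i \<lless> d}"
    using pr unfolding abs_prec_def by blast
  have OO: "\<forall>i\<in>I. Os i \<in> \<Omega>" using o(2) by blast
  have ch: "consistent_family I b (CC Os)" by (rule cons_hat_of_abs[OF o(1) OO o(3)])
  have fB: "step_join I b (CC Os) \<in> Bhat \<Omega> D0" by (rule BhatI[OF o(1) o(2) ch])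
  have "(\<lambda>f. f \<circ> iota \<Omega>) (step_join I b (CC Os)) = (\<lambda>f. f \<circ> iota \<Omega>) f"
    using hat_comp[OF OO, of b] o(4) by simp
  then have ff: "step_join I b (CC Os) = f" using inj_onD[OF hat_inj _ fB f] by blast
  obtain I2 b2 W2 where g1: "g = step_join I2 b2 (CC W2)" "finite I2" "\<forall>i\<in>I2. W2 i \<in> \<Omega> \<and> b2 i \<in> D0"
     "consistent_family I2 b2 (CC W2)" using BhatE[OF g] by blast
  have A: "b i \<lless> g y" if i: "i \<in> I" and y: "y \<in> CC Os i" for i y
  proof -
    have yX: "y \<in> Xhat \<Omega>" and dy: "down_base \<Omega> (Os i) \<in> y" using y by (simp_all add: Ohat_iff)
    have F1: "finite (insert (Os i) (W2 ` I2))" using g1(2) by simp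
    have F2: "insert (Os i) (W2 ` I2) \<subseteq> \<Omega>" unfolding insert_subset image_subset_iff using g1(3) OO i by simp
    obtain x where x: "x \<in> topspace X" "\<forall>V\<in>insert (Os i) (W2 ` I2). (down_base \<Omega> V \<in> y \<longleftrightarrow> x \<in> V)"
      using pattern[OF yX F1 F2] by (elim bexE)
    have "x \<in> Os i" using x dy by blast
    then have "b i \<lless> g (iota \<Omega> x)" using o(5) i by auto
    moreover have "g y = g (iota \<Omega> x)" unfolding g1(1)
      by (rule transfer[OF yX x(1)]) (use x g1(3) in blast)
    ultimately show ?thesis by simp
  qed
  show ?thesis unfolding way_below_in_def
  proof (intro allI impI)
    fix S s assume S: "S \<subseteq> ?P" "dom_directed S" "is_lub_in ?P S s" "g \<le> s"
    have K: "\<exists>k. k \<in> S \<and> (\<forall>y\<in>CC Os i. b i \<lless> k y)" if i: "i \<in> I" for i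
    proof -
      define VV where "VV = (\<lambda>k. {y \<in> Xhat \<Omega>. b i \<lless> k y}) ` S"
      have ne: "VV \<noteq> {}" using dir_ne[OF S(2)] unfolding VV_def by blast
      have op: "\<forall>V\<in>VV. openin (Xhat_top \<Omega>) V"
      proof
        fix V assume "V \<in> VV"
        then obtain k where k: "k \<in> S" "V = {y \<in> Xhat \<Omega>. b i \<lless> k y}" unfolding VV_def by blast
        have "k \<in> ?P" using k S(1) by blast
        then have "openin (Xhat_top \<Omega>) {y \<in> topspace (Xhat_top \<Omega>). k y \<in> {d. b i \<lless> d}}"
          using wb_scott_open unfolding cont_fun_space_def by blast
        then show "openin (Xhat_top \<Omega>) V" unfolding k(2) topspace_Xhat by simp
      qed
      have dir: "\<forall>V1\<in>VV. \<forall>V2\<in>VV. \<exists>V3\<in>VV. V1 \<union> V2 \<subseteq> V3"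
      proof (intro ballI)
        fix V1 V2 assume "V1 \<in> VV" "V2 \<in> VV"
        then obtain k1 k2 where k: "k1 \<in> S" "V1 = {y \<in> Xhat \<Omega>. b i \<lless> k1 y}"
          "k2 \<in> S" "V2 = {y \<in> Xhat \<Omega>. b i \<lless> k2 y}" unfolding VV_def by blast
        obtain k3 where k3: "k3 \<in> S" "k1 \<le> k3" "k2 \<le> k3" using dir_ub[OF S(2) k(1) k(3)] by blast
        have "V1 \<union> V2 \<subseteq> {y \<in> Xhat \<Omega>. b i \<lless> k3 y}"
        proof
          fix y assume "y \<in> V1 \<union> V2"
          then show "y \<in> {y \<in> Xhat \<Omega>. b i \<lless> k3 y}"
          proof
            assume "y \<in> V1"
            then show ?thesis using k(2) k3(2) wb_trans_le[OF order_refl] by (auto simp: le_fun_def)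
          next
            assume "y \<in> V2"
            then show ?thesis using k(4) k3(3) wb_trans_le[OF order_refl] by (auto simp: le_fun_def)
          qed
        qed
        moreover have "{y \<in> Xhat \<Omega>. b i \<lless> k3 y} \<in> VV" unfolding VV_def using k3(1) by blast
        ultimately show "\<exists>V3\<in>VV. V1 \<union> V2 \<subseteq> V3" by blast
      qed
      have cov: "CC Os i \<subseteq> \<Union>VV"
      proof
        fix y assume y: "y \<in> CC Os i"
        then have yX: "y \<in> Xhat \<Omega>" by (simp add: Ohat_iff)
        have "b i \<lless> s y" using A[OF i y] S(4) wb_trans_le[OF order_refl] by (auto simp: le_fun_def)
        then have "s y \<in> {d. b i \<lless> d}" by simp
        then have "{k y | k. k \<in> S} \<inter> {d. b i \<lless> d} \<noteq> {}"
          using wb_scott_open ptw_dir[OF S(2)] ptw_lub[OF S(1,2,3)] unfolding scott_open_def by blast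
        then obtain k where "k \<in> S" "b i \<lless> k y" by blast
        then show "y \<in> \<Union>VV" unfolding VV_def using yX by blast
      qed
      obtain V where "V \<in> VV" "CC Os i \<subseteq> V" using compact_down[OF _ ne op dir cov] OO i by blast
      then show ?thesis unfolding VV_def by blast
    qed
    then have "\<forall>i\<in>I. \<exists>k. k \<in> S \<and> (\<forall>y\<in>CC Os i. b i \<lless> k y)" by blast
    then obtain kk where kk: "\<forall>i\<in>I. kk i \<in> S \<and> (\<forall>y\<in>CC Os i. b i \<lless> kk i y)"
      using bchoice[of I "\<lambda>i k. k \<in> S \<and> (\<forall>y\<in>CC Os i. b i \<lless> k y)"] by blast
    have "finite (kk ` I)" using o(1) by simp
    moreover have "kk ` I \<subseteq> S" using kk by blast
    ultimately obtain d where d: "d \<in> S" "\<forall>k\<in>kk ` I. k \<le> d" using dir_fin_ub[OF S(2)] by blast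
    have "f \<le> d"
    proof (rule le_funI)
      fix y
      show "f y \<le> d y" unfolding ff[symmetric]
      proof (rule step_le)
        fix i assume i: "i \<in> I" "y \<in> CC Os i"
        then have "b i \<le> kk i y" using kk wb_le by blast
        also have "\<dots> \<le> d y" using d(2) i(1) by (simp add: le_fun_def)
        finally show "b i \<le> d y" .
      qed
    qed
    then show "\<exists>d\<in>S. f \<le> d" using d(1) by blast
  qed
qed

end

theorem mainTheorem18:
  fixes X :: "'a topology" and \<Omega>0 :: "'a set set" and D0 :: "'d::order set"
  assumes "viable_base X \<Omega>0"
    and "bc_domain_with_basis D0"
  shows "bij_betw (\<lambda>f. f \<circ> iota \<Omega>0) (Bhat \<Omega>0 D0) (B_abs \<Omega>0 D0)
    \<and> (\<forall>I b W. finite I \<longrightarrow> (\<forall>i\<in>I. W i \<in> \<Omega>0 \<and> b i \<in> D0) \<longrightarrow>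
          consistent_family I b (\<lambda>i. Ohat \<Omega>0 (down_base \<Omega>0 (W i))) \<longrightarrow>
          step_join I b (\<lambda>i. Ohat \<Omega>0 (down_base \<Omega>0 (W i))) \<circ> iota \<Omega>0 = step_join I b W)
    \<and> (\<forall>f\<in>Bhat \<Omega>0 D0. \<forall>g\<in>Bhat \<Omega>0 D0.
          way_below_in (cont_fun_space (Xhat_top \<Omega>0)) f g
          \<longleftrightarrow> abs_prec \<Omega>0 D0 (f \<circ> iota \<Omega>0) (g \<circ> iota \<Omega>0))"
proof -
  interpret setting X \<Omega>0 D0
    unfolding setting_def vb_def bcd_def using assms by (rule conjI)
  have 1: "bij_betw (\<lambda>f. f \<circ> iota \<Omega>0) (Bhat \<Omega>0 D0) (B_abs \<Omega>0 D0)"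
    unfolding bij_betw_def using hat_inj hat_image by (rule conjI)
  have 2: "\<forall>I b W. finite I \<longrightarrow> (\<forall>i\<in>I. W i \<in> \<Omega>0 \<and> b i \<in> D0) \<longrightarrow>
          consistent_family I b (\<lambda>i. Ohat \<Omega>0 (down_base \<Omega>0 (W i))) \<longrightarrow>
          step_join I b (\<lambda>i. Ohat \<Omega>0 (down_base \<Omega>0 (W i))) \<circ> iota \<Omega>0 = step_join I b W"
  proof (intro allI impI)
    fix I and b :: "nat \<Rightarrow> 'd" and W
    assume "\<forall>i\<in>I. W i \<in> \<Omega>0 \<and> b i \<in> D0"
    then have "\<forall>i\<in>I. W i \<in> \<Omega>0" by blast
    then show "step_join I b (\<lambda>i. Ohat \<Omega>0 (down_base \<Omega>0 (W i))) \<circ> iota \<Omega>0 = step_join I b W"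
      by (rule hat_comp)
  qed
  have 3: "\<forall>f\<in>Bhat \<Omega>0 D0. \<forall>g\<in>Bhat \<Omega>0 D0.
          way_below_in (cont_fun_space (Xhat_top \<Omega>0)) f g
          \<longleftrightarrow> abs_prec \<Omega>0 D0 (f \<circ> iota \<Omega>0) (g \<circ> iota \<Omega>0)"
    using wb_to_prec prec_to_wb by blast
  show ?thesis using 1 2 3 by blast
qed

end
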